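(* Let $r,R>0$ satisfy $r<\underline{H}(\mathbf{X}|\mathbf{Y})$ and $r+R>\overline{H}(\mathbf{X})$. Then for every $\delta>0$ and all sufficiently large $n$ there exist $A\in\mathcal{A}_n$, $B\in\mathcal{B}_n$ and $\mathbf{c}\in\mathrm{Im}\mathcal{A}_n$ such that \[ \mathrm{Error}(A,B,\mathbf{c},D)\le P\bigl(d_n(X^n,Y^n)>D\bigr)+\delta . \]
   Context: Logarithms base 2. $\mathbf{Y}=\{Y^n\}$ is a general source on an arbitrary alphabet $\mathcal{Y}^n$; the reproduction alphabet is $\mathcal{X}^n$ with $\mathcal{X}$ finite; $d_n:\mathcal{X}^n\times\mathcal{Y}^n\to[0,\infty)$ is a distortion function and $D\ge0$. A conditional distribution $\mu_{X^n|Y^n}$ is given for each $n$, $(X^n,Y^n)$ has joint law $\mu_{X^n|Y^n}(\mathbf{x}|\mathbf{y})\mu_{Y^n}(\mathbf{y})$, and $\mu_{X^n}$ is the resulting marginal. $\overline{H}(\mathbf{X})=\inf\{\theta:\lim_nP(\frac1n\log\frac1{\mu_{X^n}(X^n)}>\theta)=0\}$, $\underline{H}(\mathbf{X}|\mathbf{Y})=\sup\{\theta:\lim_nP(\frac1n\log\frac1{\mu_{X^n|Y^n}(X^n|Y^n)}<\theta)=0\}$. Ensembles and hash property: an ensemble is a sequence $\{(\mathcal{A}_n,p_{\mathsf{A},n})\}$ where $\mathcal{A}_n$ is a set of functions $A:\mathcal{X}^n\to\mathrm{Im}\mathcal{A}_n:=\bigcup_{A\in\mathcal{A}_n}\{A\mathbf{u}:\mathbf{u}\in\mathcal{X}^n\}$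 and $p_{\mathsf{A},n}$ a probability distribution on $\mathcal{A}_n$; it has an $(\boldsymbol\alpha,\boldsymbol\beta)$-hash property if there are sequences $\alpha(n)\to1$, $\beta(n)\to0$ such that for all $n$ and $\mathbf{u}$, $\sum p_{\mathsf{A},n}(\{A:A\mathbf{u}=A\mathbf{u}'\})\le\beta(n)$, summing over $\mathbf{u}'\ne\mathbf{u}$ with $p_{\mathsf{A},n}(\{A:A\mathbf{u}=A\mathbf{u}'\})>\alpha(n)/|\mathrm{Im}\mathcal{A}_n|$. Setting: $\{(\mathcal{A}_n,p_{\mathsf{A},n})\}$, $\{(\mathcal{B}_n,p_{\mathsf{B},n})\}$ are ensembles of functions on $\mathcal{X}^n$, each with some hash property, with $\frac1n\log|\mathrm{Im}\mathcal{A}_n|=r$, $\frac1n\log|\mathrm{Im}\mathcal{B}_n|=R$. $\mathcal{C}_A(\mathbf{c})=\{\mathbf{x}:A\mathbf{x}=\mathbf{c}\}$, $\mathcal{C}_{AB}(\mathbf{c},\mathbf{m})=\{\mathbf{x}:A\mathbf{x}=\mathbf{c},B\mathbf{x}=\mathbf{m}\}$. Stochastic encoder $\Phi_n(\mathbf{y})=B\widetilde{X}$ where $\widetilde{X}$ has distribution $\mu_{X^n|Y^n}(\mathbf{x}|\mathbf{y})/\mu_{X^n|Y^n}(\mathcal{C}_A(\mathbf{c})|\mathbf{y})$ on $\mathcal{C}_A(\mathbf{c})$ (encoding error if $\mu_{X^n|Y^n}(\mathcal{C}_A(\mathbf{c})|\mathbf{y})=0$). Decoder $\psi_n(\mathbf{m})=\arg\max_{\mathbf{x}'\in\mathcal{C}_{AB}(\mathbf{c},\mathbf{m})}\mu_{X^n}(\mathbf{x}')$.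 $\mathrm{Error}(A,B,\mathbf{c},D)=P(d_n(\psi_n(\Phi_n(Y^n)),Y^n)>D)$, with the convention that the distortion is $\infty$ when an encoding error occurs. *)

theory Defs
  imports "HOL-Probability.Probability"
begin

definition seqs :: "nat \<Rightarrow> 'x list set" where
  "seqs n = {xs. length xs = n}"

definition marg :: "'y measure \<Rightarrow> ('x list \<Rightarrow> 'y \<Rightarrow> real) \<Rightarrow> 'x list \<Rightarrow> real" where
  "marg M W x = (\<integral>y. W x y \<partial>M)"

definition joint_prob :: "'y measure \<Rightarrow> nat \<Rightarrow> ('x list \<Rightarrow> 'y \<Rightarrow> real)
    \<Rightarrow> ('x list \<Rightarrow> 'y \<Rightarrow> bool) \<Rightarrow> real" where
  "joint_prob M n W E = (\<integral>y. (\<Sum>x\<in>seqs n. W x y * (if E x y then 1 else 0)) \<partial>M)"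

text \<open>Spectral sup-entropy rate of X (infimum of the empty set is +infinity).\<close>
definition sup_entropy :: "(nat \<Rightarrow> 'y measure) \<Rightarrow> (nat \<Rightarrow> 'x list \<Rightarrow> 'y \<Rightarrow> real) \<Rightarrow> ereal" where
  "sup_entropy PY W = Inf (ereal ` {\<theta>. (\<lambda>n. joint_prob (PY n) n (W n)
       (\<lambda>x y. 1 / real n * log 2 (1 / marg (PY n) (W n) x) > \<theta>)) \<longlonglongrightarrow> 0})"

definition inf_cond_entropy :: "(nat \<Rightarrow> 'y measure) \<Rightarrow> (nat \<Rightarrow> 'x list \<Rightarrow> 'y \<Rightarrow> real) \<Rightarrow> ereal" where
  "inf_cond_entropy PY W = Sup (ereal ` {\<theta>. (\<lambda>n. joint_prob (PY n) n (W n)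
       (\<lambda>x y. 1 / real n * log 2 (1 / W n x y) < \<theta>)) \<longlonglongrightarrow> 0})"

definition img :: "('x list \<Rightarrow> 'a) set \<Rightarrow> nat \<Rightarrow> 'a set" where
  "img F n = (\<Union>A\<in>F. A ` seqs n)"

definition ensemble :: "(nat \<Rightarrow> ('x list \<Rightarrow> 'a) set) \<Rightarrow> (nat \<Rightarrow> ('x list \<Rightarrow> 'a) pmf) \<Rightarrow> bool" where
  "ensemble F p \<longleftrightarrow> (\<forall>n. set_pmf (p n) \<subseteq> F n)"

definition hash_property :: "(nat \<Rightarrow> ('x list \<Rightarrow> 'a) set) \<Rightarrow> (nat \<Rightarrow> ('x list \<Rightarrow> 'a) pmf) \<Rightarrow> bool" where
  "hash_property F p \<longleftrightarrow> (\<exists>\<alpha> \<beta> :: nat \<Rightarrow> real. \<alpha> \<longlonglongrightarrow> 1 \<and> \<beta> \<longlonglongrightarrow> 0 \<and>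
     (\<forall>n. \<forall>u\<in>seqs n.
        (\<Sum>u'\<in>{u'\<in>seqs n. u' \<noteq> u \<and>
              measure_pmf.prob (p n) {A. A u = A u'} > \<alpha> n / real (card (img (F n) n))}.
            measure_pmf.prob (p n) {A. A u = A u'}) \<le> \<beta> n))"

text \<open>Decoder: a maximiser of mu_{X^n} over C_AB(c,m) (ties broken by Hilbert choice).\<close>
definition decoder :: "'y measure \<Rightarrow> nat \<Rightarrow> ('x list \<Rightarrow> 'y \<Rightarrow> real)
    \<Rightarrow> ('x list \<Rightarrow> 'a) \<Rightarrow> ('x list \<Rightarrow> 'b) \<Rightarrow> 'a \<Rightarrow> 'b \<Rightarrow> 'x list" where
  "decoder M n W A B c m = arg_max (marg M W) (\<lambda>x. x \<in> seqs n \<and> A x = c \<and> B x = m)"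

text \<open>Error(A,B,c,D): averaged over Y^n and the stochastic encoder; an encoding
  error (W(C_A(c)|y) = 0) counts as distortion exceeding D.\<close>
definition code_error :: "'y measure \<Rightarrow> nat \<Rightarrow> ('x list \<Rightarrow> 'y \<Rightarrow> real)
    \<Rightarrow> ('x list \<Rightarrow> 'y \<Rightarrow> real) \<Rightarrow> ('x list \<Rightarrow> 'a) \<Rightarrow> ('x list \<Rightarrow> 'b) \<Rightarrow> 'a \<Rightarrow> real \<Rightarrow> real" where
  "code_error M n W d A B c D =
     (\<integral>y. (let Z = (\<Sum>x\<in>{x\<in>seqs n. A x = c}. W x y) in
           if Z = 0 then 1
           else (\<Sum>x\<in>{x\<in>seqs n. A x = c}. W x y / Z *
                   (if d (decoder M n W A B c (B x)) y > D then 1 else 0))) \<partial>M)"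

end

theory Submission
  imports Defs
begin


lemma finite_seqs[simp]: "finite (seqs n :: ('x::finite) list set)"
proof -
  have "finite {xs::'x list. set xs \<subseteq> UNIV \<and> length xs = n}" by (rule finite_lists_length_eq) simp
  then show ?thesis unfolding seqs_def by simp
qed

lemma pmf_fubini:
  fixes p :: "'a pmf" and M :: "'y measure" and g :: "'a \<Rightarrow> 'y \<Rightarrow> real"
  assumes M: "prob_space M"
    and meas: "\<And>a. g a \<in> borel_measurable M"
    and bnd: "\<And>a y. a \<in> set_pmf p \<Longrightarrow> y \<in> space M \<Longrightarrow> \<bar>g a y\<bar> \<le> C"
  shows "measure_pmf.expectation p (\<lambda>a. \<integral>y. g a y \<partial>M) = (\<integral>y. measure_pmf.expectation p (\<lambda>a. g a y) \<partial>M)"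
proof -
  interpret A: prob_space "restrict_space p p"
    by (intro prob_space_restrict_space measure_pmf.emeasure_eq_1_AE)
       (auto simp: AE_measure_pmf_iff)
  interpret Mp: prob_space M by (rule M)
  interpret AB: pair_prob_space "restrict_space p p" M
    by unfold_locales
  have "measure_pmf.expectation p (\<lambda>a. \<integral>y. g a y \<partial>M) = (\<integral>a. (\<integral>y. g a y \<partial>M) \<partial>restrict_space p p)"
    by (rule integral_pmf_restrict) auto
  also have "\<dots> = (\<integral>y. \<integral>a. g a y \<partial>restrict_space p p \<partial>M)"
    by (rule AB.Fubini_integral[symmetric])
       (auto intro!: AB.integrable_const_bound[where B=C] measurable_pair_restrict_pmf1 meas
             simp: space_pair_measure space_restrict_space bnd)
  also have "\<dots> = (\<integral>y. measure_pmf.expectation p (\<lambda>a. g a y) \<partial>M)"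
    by (rule Bochner_Integration.integral_cong) (auto intro!: integral_pmf_restrict[symmetric])
  finally show ?thesis .
qed



lemma avg_one:
  fixes Z s T m :: real
  assumes "0 \<le> s" "s \<le> Z" "m > 0"
    and "T = (if Z = 0 then 1 else s / Z)"
  shows "T / m \<le> s + \<bar>Z - 1/m\<bar>"
proof (cases "Z = 0")
  case True then show ?thesis using assms by simp
next
  case False
  then have Zp: "Z > 0" using assms by simp
  have T: "T = s / Z" using False assms by simp
  have le1: "s / Z \<le> 1" using assms Zp by simp
  have "s / Z / m - s = (s / Z) * (1 / m - Z)" using Zp assms by (simp add: field_simps)
  also have "\<dots> \<le> (s/Z) * \<bar>Z - 1/m\<bar>" using assms Zp
    by (intro mult_left_mono) auto
  also have "\<dots> \<le> 1 * \<bar>Z - 1/m\<bar>" using le1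
    by (intro mult_right_mono) auto
  finally show ?thesis using T by simp
qed

lemma avg_pointwise:
  fixes S :: "'x set" and I :: "'c set" and A :: "'x \<Rightarrow> 'c" and w :: "'x \<Rightarrow> real"
    and H :: "'c \<Rightarrow> 'x \<Rightarrow> real"
  assumes fin: "finite S" "finite I" and ne: "I \<noteq> {}" and AS: "A ` S \<subseteq> I"
    and w: "\<And>x. x \<in> S \<Longrightarrow> w x \<ge> 0" and H: "\<And>c x. 0 \<le> H c x" "\<And>c x. H c x \<le> 1"
  shows "(\<Sum>c\<in>I. (let Z = (\<Sum>x\<in>{x\<in>S. A x = c}. w x) in if Z = 0 then 1
            else (\<Sum>x\<in>{x\<in>S. A x = c}. w x / Z * H c x))) / real (card I)
        \<le> (\<Sum>x\<in>S. w x * H (A x) x) + (\<Sum>c\<in>I. \<bar>(\<Sum>x\<in>{x\<in>S. A x = c}. w x) - 1 / real (card I)\<bar>)"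
proof -
  define m where "m = real (card I)"
  have mp: "m > 0" using fin ne by (simp add: m_def card_gt_0_iff)
  define s where "s c = (\<Sum>x\<in>{x\<in>S. A x = c}. w x * H c x)" for c
  define Z where "Z c = (\<Sum>x\<in>{x\<in>S. A x = c}. w x)" for c
  have each: "(let Z = (\<Sum>x\<in>{x\<in>S. A x = c}. w x) in if Z = 0 then 1
            else (\<Sum>x\<in>{x\<in>S. A x = c}. w x / Z * H c x)) / m \<le> s c + \<bar>Z c - 1/m\<bar>" for c
  proof (rule avg_one)
    show "0 \<le> s c" unfolding s_def using w H by (auto intro!: sum_nonneg)
    show "s c \<le> Z c" unfolding s_def Z_def using w H
      by (intro sum_mono) (auto intro: mult_left_le)
    show "0 < m" by (rule mp)
    show "(let Z = (\<Sum>x\<in>{x\<in>S. A x = c}. w x) in if Z = 0 then 1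
            else (\<Sum>x\<in>{x\<in>S. A x = c}. w x / Z * H c x)) = (if Z c = 0 then 1 else s c / Z c)"
      unfolding Let_def s_def Z_def by (simp add: sum_divide_distrib)
  qed
  have "(\<Sum>c\<in>I. (let Z = (\<Sum>x\<in>{x\<in>S. A x = c}. w x) in if Z = 0 then 1
            else (\<Sum>x\<in>{x\<in>S. A x = c}. w x / Z * H c x))) / m
      = (\<Sum>c\<in>I. (let Z = (\<Sum>x\<in>{x\<in>S. A x = c}. w x) in if Z = 0 then 1
            else (\<Sum>x\<in>{x\<in>S. A x = c}. w x / Z * H c x)) / m)"
    by (simp add: sum_divide_distrib)
  also have "\<dots> \<le> (\<Sum>c\<in>I. s c + \<bar>Z c - 1/m\<bar>)" by (intro sum_mono each)
  also have "\<dots> = (\<Sum>c\<in>I. s c) + (\<Sum>c\<in>I. \<bar>Z c - 1/m\<bar>)" by (simp add: sum.distrib)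
  also have "(\<Sum>c\<in>I. s c) = (\<Sum>x\<in>S. w x * H (A x) x)"
  proof -
    have "(\<Sum>c\<in>I. s c) = (\<Sum>c\<in>I. \<Sum>x\<in>{x\<in>S. A x = c}. w x * H (A x) x)"
      unfolding s_def by (intro sum.cong refl) auto
    also have "\<dots> = (\<Sum>x\<in>S. w x * H (A x) x)"
      by (rule sum.group[OF fin AS])
    finally show ?thesis .
  qed
  finally show ?thesis unfolding m_def Z_def .
qed



lemma let_bound:
  fixes S :: "'x set" and w :: "'x \<Rightarrow> real" and H :: "'x \<Rightarrow> real"
  assumes "finite S" "\<And>x. x\<in>S \<Longrightarrow> w x \<ge> 0" "\<And>x. 0 \<le> H x" "\<And>x. H x \<le> 1"
  shows "0 \<le> (let Z = (\<Sum>x\<in>S. w x) in if Z = 0 then 1 else (\<Sum>x\<in>S. w x / Z * H x))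
       \<and> (let Z = (\<Sum>x\<in>S. w x) in if Z = 0 then 1 else (\<Sum>x\<in>S. w x / Z * H x)) \<le> 1"
proof -
  define Z where "Z = (\<Sum>x\<in>S. w x)"
  have Z0: "Z \<ge> 0" unfolding Z_def using assms by (auto intro!: sum_nonneg)
  have "(\<Sum>x\<in>S. w x / Z * H x) = (\<Sum>x\<in>S. w x * H x) / Z"
    by (simp add: sum_divide_distrib)
  moreover have "0 \<le> (\<Sum>x\<in>S. w x * H x)" using assms by (auto intro!: sum_nonneg)
  moreover have "(\<Sum>x\<in>S. w x * H x) \<le> Z" unfolding Z_def using assms
    by (intro sum_mono) (auto intro: mult_left_le)
  ultimately show ?thesis using Z0 unfolding Z_def[symmetric] Let_def
    by (auto simp: divide_le_eq_1)
qed

lemma sum_cosets: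
  fixes S :: "'x set" and I :: "'c set"
  assumes "finite S" "finite I" "A ` S \<subseteq> I"
  shows "(\<Sum>c\<in>I. (\<Sum>x\<in>{x\<in>S. A x = c}. w x)) = (\<Sum>x\<in>S. w x)"
  using sum.group[OF assms, of w] by simp

definition E1f :: "'y measure \<Rightarrow> nat \<Rightarrow> ('x list \<Rightarrow> 'y \<Rightarrow> real) \<Rightarrow> ('x list \<Rightarrow> 'a) \<Rightarrow> ('x list \<Rightarrow> 'b) \<Rightarrow> 'y \<Rightarrow> real" where
  "E1f M n w A B y = (\<Sum>x\<in>seqs n. w x y * (if decoder M n w A B (A x) (B x) \<noteq> x then 1 else 0))"

definition E2f :: "nat \<Rightarrow> ('x list \<Rightarrow> 'y \<Rightarrow> real) \<Rightarrow> 'a set \<Rightarrow> ('x list \<Rightarrow> 'a) \<Rightarrow> 'y \<Rightarrow> real" where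
  "E2f n w I A y = (\<Sum>c\<in>I. \<bar>(\<Sum>x\<in>{x\<in>seqs n. A x = c}. w x y) - 1 / real (card I)\<bar>)"

locale chan =
  fixes M :: "'y measure" and n :: nat and w :: "('x::finite) list \<Rightarrow> 'y \<Rightarrow> real"
  assumes M: "prob_space M"
    and w_meas: "\<And>x. w x \<in> borel_measurable M"
    and w_nonneg: "\<And>x y. y \<in> space M \<Longrightarrow> w x y \<ge> 0"
    and w_sum: "\<And>y. y \<in> space M \<Longrightarrow> (\<Sum>x\<in>seqs n. w x y) = 1"

sublocale chan \<subseteq> P: prob_space M by (rule M)

context chan begin

lemma w_le1: "y \<in> space M \<Longrightarrow> x \<in> seqs n \<Longrightarrow> w x y \<le> 1"
  using w_sum[of y] member_le_sum[of x "seqs n" "\<lambda>x. w x y"] w_nonneg by auto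

lemma E1f_meas: "E1f M n w A B \<in> borel_measurable M"
  unfolding E1f_def using w_meas by measurable

lemma E1f_bnd: "y \<in> space M \<Longrightarrow> 0 \<le> E1f M n w A B y \<and> E1f M n w A B y \<le> 1"
proof -
  assume y: "y \<in> space M"
  have "E1f M n w A B y \<le> (\<Sum>x\<in>seqs n. w x y)" unfolding E1f_def using w_nonneg[OF y]
    by (intro sum_mono) auto
  moreover have "0 \<le> E1f M n w A B y" unfolding E1f_def using w_nonneg[OF y]
    by (intro sum_nonneg) auto
  ultimately show ?thesis using w_sum[OF y] by simp
qed

lemma E2f_meas: "E2f n w I A \<in> borel_measurable M"
  unfolding E2f_def using w_meas by measurable

lemma E2f_bnd:
  assumes "finite I" "A ` seqs n \<subseteq> I" "y \<in> space M"
  shows "0 \<le> E2f n w I A y \<and> E2f n w I A y \<le> 2"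
proof -
  have "E2f n w I A y \<le> (\<Sum>c\<in>I. (\<Sum>x\<in>{x\<in>seqs n. A x = c}. w x y) + 1 / real (card I))"
    unfolding E2f_def using w_nonneg[OF assms(3)]
    by (intro sum_mono) (auto simp: abs_le_iff intro!: sum_nonneg)
  also have "\<dots> = (\<Sum>x\<in>seqs n. w x y) + real (card I) * (1 / real (card I))"
    by (simp add: sum.distrib sum_cosets[OF finite_seqs assms(1,2)])
  also have "\<dots> \<le> 2" using w_sum[OF assms(3)] by simp
  finally show ?thesis unfolding E2f_def by (auto intro!: sum_nonneg)
qed

lemma exists_c:
  fixes dd :: "'x list \<Rightarrow> 'y \<Rightarrow> real" and I :: "'a set" and A :: "'x list \<Rightarrow> 'a" and B :: "'x list \<Rightarrow> 'b"
  assumes dd_meas: "\<And>x. dd x \<in> borel_measurable M"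
    and I: "finite I" "I \<noteq> {}" and AS: "A ` seqs n \<subseteq> I"
  shows "\<exists>c\<in>I. code_error M n w dd A B c D \<le> joint_prob M n w (\<lambda>x y. dd x y > D)
            + (\<integral>y. E1f M n w A B y \<partial>M) + (\<integral>y. E2f n w I A y \<partial>M)"
proof -
  define T where "T c y = (let Z = (\<Sum>x\<in>{x\<in>seqs n. A x = c}. w x y) in
           if Z = 0 then 1
           else (\<Sum>x\<in>{x\<in>seqs n. A x = c}. w x y / Z *
                   (if dd (decoder M n w A B c (B x)) y > D then 1 else 0)))" for c y
  have ce: "code_error M n w dd A B c D = (\<integral>y. T c y \<partial>M)" for c
    unfolding code_error_def T_def ..
  have Tmeas: "T c \<in> borel_measurable M" for c
    unfolding T_def Let_def using w_meas dd_meas by measurable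
  have Tbnd: "y \<in> space M \<Longrightarrow> 0 \<le> T c y \<and> T c y \<le> 1" for c y
    unfolding T_def by (rule let_bound) (auto simp: w_nonneg)
  have Tint: "integrable M (T c)" for c
    by (rule P.integrable_const_bound[where B=1]) (auto simp: Tbnd Tmeas)
  define G where "G y = (\<Sum>x\<in>seqs n. w x y * (if dd x y > D then 1 else 0))" for y
  have Gmeas: "G \<in> borel_measurable M" unfolding G_def using w_meas dd_meas by measurable
  have Gbnd: "y \<in> space M \<Longrightarrow> 0 \<le> G y \<and> G y \<le> 1" for y
  proof -
    assume y: "y \<in> space M"
    have "G y \<le> (\<Sum>x\<in>seqs n. w x y)" unfolding G_def using w_nonneg[OF y]
      by (intro sum_mono) auto
    moreover have "0 \<le> G y" unfolding G_def using w_nonneg[OF y]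
      by (intro sum_nonneg) auto
    ultimately show ?thesis using w_sum[OF y] by simp
  qed
  have Gint: "integrable M G"
    by (rule P.integrable_const_bound[where B=1]) (auto simp: Gbnd Gmeas)
  have E1int: "integrable M (E1f M n w A B)"
    by (rule P.integrable_const_bound[where B=1]) (auto simp: E1f_bnd E1f_meas)
  have E2int: "integrable M (E2f n w I A)"
    by (rule P.integrable_const_bound[where B=2]) (auto simp: E2f_bnd[OF I(1) AS] E2f_meas)
  have jp: "joint_prob M n w (\<lambda>x y. dd x y > D) = (\<integral>y. G y \<partial>M)"
    unfolding joint_prob_def G_def ..
  have pw: "(\<Sum>c\<in>I. T c y) / real (card I) \<le> G y + E1f M n w A B y + E2f n w I A y"
    if y: "y \<in> space M" for y
  proof -
    define H where "H c x = (if dd (decoder M n w A B c (B x)) y > D then 1 else (0::real))" for c x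
    have "(\<Sum>c\<in>I. T c y) / real (card I) \<le> (\<Sum>x\<in>seqs n. w x y * H (A x) x) + E2f n w I A y"
      unfolding T_def E2f_def H_def
      by (rule avg_pointwise[OF finite_seqs I AS]) (auto simp: w_nonneg[OF y])
    also have "(\<Sum>x\<in>seqs n. w x y * H (A x) x) \<le> G y + E1f M n w A B y"
      unfolding G_def E1f_def sum.distrib[symmetric] H_def using w_nonneg[OF y]
      by (intro sum_mono) (auto simp: algebra_simps)
    finally show ?thesis by simp
  qed
  have avg: "(\<Sum>c\<in>I. code_error M n w dd A B c D) / real (card I)
      \<le> joint_prob M n w (\<lambda>x y. dd x y > D) + (\<integral>y. E1f M n w A B y \<partial>M) + (\<integral>y. E2f n w I A y \<partial>M)"
  proof -
    have "(\<Sum>c\<in>I. code_error M n w dd A B c D) / real (card I) = (\<integral>y. (\<Sum>c\<in>I. T c y) / real (card I) \<partial>M)"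
      unfolding ce using Tint by (simp add: Bochner_Integration.integral_sum)
    also have "\<dots> \<le> (\<integral>y. G y + E1f M n w A B y + E2f n w I A y \<partial>M)"
      by (intro integral_mono Bochner_Integration.integrable_add Gint E1int E2int
          Bochner_Integration.integrable_divide Bochner_Integration.integrable_sum Tint pw)
    also have "\<dots> = joint_prob M n w (\<lambda>x y. dd x y > D) + (\<integral>y. E1f M n w A B y \<partial>M) + (\<integral>y. E2f n w I A y \<partial>M)"
      using Gint E1int E2int jp by simp
    finally show ?thesis .
  qed
  define f where "f c = code_error M n w dd A B c D" for c
  define m where "m = Min (f ` I)"
  have "m \<in> f ` I" unfolding m_def using I by (intro Min_in) auto
  then obtain c where c: "c \<in> I" "f c = m" by auto
  have "real (card I) * m \<le> (\<Sum>c\<in>I. f c)"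
    by (rule sum_bounded_below) (auto simp: m_def I)
  then have "m \<le> (\<Sum>c\<in>I. f c) / real (card I)" using I
    by (simp add: field_simps card_gt_0_iff)
  then show ?thesis using avg c unfolding f_def by force
qed

end


lemma emeasure_pair_pmf_times:
  "emeasure (pair_pmf p q) (X \<times> Y) = emeasure p X * emeasure q Y"
proof -
  have "emeasure (pair_pmf p q) (X \<times> Y) = (\<integral>\<^sup>+z. indicator (X \<times> Y) z \<partial>pair_pmf p q)"
    by (simp add: nn_integral_indicator)
  also have "\<dots> = (\<integral>\<^sup>+a. \<integral>\<^sup>+b. indicator X a * indicator Y b \<partial>q \<partial>p)"
    by (simp add: nn_integral_pair_pmf' indicator_times)
  also have "\<dots> = (\<integral>\<^sup>+a. indicator X a * emeasure q Y \<partial>p)"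
    by (simp add: nn_integral_cmult nn_integral_indicator)
  also have "\<dots> = emeasure p X * emeasure q Y"
    by (simp add: nn_integral_multc nn_integral_indicator)
  finally show ?thesis .
qed

lemma measure_pair_pmf_times:
  "measure (pair_pmf p q) (X \<times> Y) = measure p X * measure q Y"
  by (simp add: measure_def emeasure_pair_pmf_times enn2real_mult)

lemma collide_bound:
  fixes pA :: "('u \<Rightarrow> 'a) pmf" and pB :: "('u \<Rightarrow> 'b) pmf" and S G :: "'u set"
  assumes S: "finite S" and G: "G \<subseteq> S"
    and hA: "(\<Sum>u'\<in>{u'\<in>S. u' \<noteq> x \<and> measure_pmf.prob pA {A. A x = A u'} > qa}.
               measure_pmf.prob pA {A. A x = A u'}) \<le> bA"
    and hB: "(\<Sum>u'\<in>{u'\<in>S. u' \<noteq> x \<and> measure_pmf.prob pB {B. B x = B u'} > qb}.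
               measure_pmf.prob pB {B. B x = B u'}) \<le> bB"
  shows "measure_pmf.prob (pair_pmf pA pB) {(A,B). \<exists>x'\<in>G-{x}. A x' = A x \<and> B x' = B x}
          \<le> bA + bB + real (card G) * \<bar>qa * qb\<bar>"
proof -
  have finG: "finite G" using S G finite_subset by blast
  define pa where "pa u' = measure_pmf.prob pA {A. A x = A u'}" for u'
  define pb where "pb u' = measure_pmf.prob pB {B. B x = B u'}" for u'
  define HA where "HA = {u'\<in>S. u' \<noteq> x \<and> pa u' > qa}"
  define HB where "HB = {u'\<in>S. u' \<noteq> x \<and> pb u' > qb}"
  have eqU: "{(A,B). \<exists>x'\<in>G-{x}. A x' = A x \<and> B x' = B x}
        = (\<Union>x'\<in>G-{x}. {A. A x = A x'} \<times> {B. B x = B x'})" by auto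
  have "measure_pmf.prob (pair_pmf pA pB) {(A,B). \<exists>x'\<in>G-{x}. A x' = A x \<and> B x' = B x}
      \<le> (\<Sum>x'\<in>G-{x}. measure_pmf.prob (pair_pmf pA pB) ({A. A x = A x'} \<times> {B. B x = B x'}))"
    unfolding eqU using finG by (intro measure_UNION_le) auto
  also have "\<dots> = (\<Sum>x'\<in>G-{x}. pa x' * pb x')"
    by (simp add: measure_pair_pmf_times pa_def pb_def)
  also have "\<dots> \<le> (\<Sum>x'\<in>G-{x}. (if x' \<in> HA then pa x' else 0) + (if x' \<in> HB then pb x' else 0)
                       + \<bar>qa * qb\<bar>)"
  proof (intro sum_mono)
    fix x' assume x': "x' \<in> G - {x}"
    have pa01: "0 \<le> pa x'" "pa x' \<le> 1" and pb01: "0 \<le> pb x'" "pb x' \<le> 1"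
      by (auto simp: pa_def pb_def)
    show "pa x' * pb x' \<le> (if x' \<in> HA then pa x' else 0) + (if x' \<in> HB then pb x' else 0) + \<bar>qa * qb\<bar>"
    proof (cases "x' \<in> HA")
      case True
      then have "pa x' * pb x' \<le> pa x'" using pa01 pb01 by (simp add: mult_left_le)
      then show ?thesis using True pb01 by auto
    next
      case nA: False
      show ?thesis
      proof (cases "x' \<in> HB")
        case True
        then have "pa x' * pb x' \<le> pb x'" using pa01 pb01 by (simp add: mult_left_le_one_le)
        then show ?thesis using True nA by auto
      next
        case False
        then have "pa x' \<le> qa" "pb x' \<le> qb" using nA x' G by (auto simp: HA_def HB_def)
        then have "pa x' * pb x' \<le> qa * qb" using pa01 pb01 by (intro mult_mono) auto
        then show ?thesis using False nA by auto
      qed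
    qed
  qed
  also have "\<dots> = (\<Sum>x'\<in>(G-{x}) \<inter> HA. pa x') + (\<Sum>x'\<in>(G-{x}) \<inter> HB. pb x') + real (card (G-{x})) * \<bar>qa * qb\<bar>"
    using finG by (simp add: sum.distrib sum.inter_restrict)
  also have "\<dots> \<le> bA + bB + real (card G) * \<bar>qa * qb\<bar>"
  proof -
    have "(\<Sum>x'\<in>(G-{x}) \<inter> HA. pa x') \<le> (\<Sum>x'\<in>HA. pa x')"
      using S by (intro sum_mono2) (auto simp: HA_def pa_def)
    also have "\<dots> \<le> bA" using hA unfolding HA_def pa_def .
    finally have 1: "(\<Sum>x'\<in>(G-{x}) \<inter> HA. pa x') \<le> bA" .
    have "(\<Sum>x'\<in>(G-{x}) \<inter> HB. pb x') \<le> (\<Sum>x'\<in>HB. pb x')"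
      using S by (intro sum_mono2) (auto simp: HB_def pb_def)
    also have "\<dots> \<le> bB" using hB unfolding HB_def pb_def .
    finally have 2: "(\<Sum>x'\<in>(G-{x}) \<inter> HB. pb x') \<le> bB" .
    have 3: "real (card (G-{x})) * \<bar>qa * qb\<bar> \<le> real (card G) * \<bar>qa * qb\<bar>"
      using finG by (intro mult_right_mono) (auto simp: card_mono)
    show ?thesis using 1 2 3 by linarith
  qed
  finally show ?thesis .
qed



lemma pmf_exp_ind:
  "measure_pmf.expectation p (\<lambda>z. if Q z then 1 else 0 :: real) = measure_pmf.prob p {z. Q z}"
proof -
  have "(\<lambda>z. if Q z then 1 else 0::real) = indicator {z. Q z}" by (auto simp: indicator_def)
  then show ?thesis by simp
qed

lemma pmf_integrable_bnd:
  fixes f :: "'a \<Rightarrow> real"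
  assumes "\<And>z. z \<in> set_pmf p \<Longrightarrow> \<bar>f z\<bar> \<le> C"
  shows "integrable (measure_pmf p) f"
  by (rule measure_pmf.integrable_const_bound[where B=C]) (auto simp: AE_measure_pmf_iff assms)

lemma seqs_ne: "seqs n \<noteq> {}"
  unfolding seqs_def by (auto intro!: exI[of _ "replicate n undefined"])

context chan begin

lemma w_int: "x \<in> seqs n \<Longrightarrow> integrable M (w x)"
  by (rule P.integrable_const_bound[where B=1]) (auto simp: w_meas w_nonneg w_le1)

lemma marg_nonneg: "x \<in> seqs n \<Longrightarrow> marg M w x \<ge> 0"
  unfolding marg_def by (auto intro!: integral_nonneg_AE simp: w_nonneg)

lemma marg_sum: "(\<Sum>x\<in>seqs n. marg M w x) = 1"
proof -
  have "(\<Sum>x\<in>seqs n. marg M w x) = (\<integral>y. (\<Sum>x\<in>seqs n. w x y) \<partial>M)"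
    unfolding marg_def by (rule Bochner_Integration.integral_sum[symmetric]) (auto intro: w_int)
  also have "\<dots> = (\<integral>y. 1 \<partial>M)" by (rule Bochner_Integration.integral_cong) (auto simp: w_sum)
  finally show ?thesis using P.prob_space by simp
qed

lemma jp_x: "joint_prob M n w (\<lambda>x y. E x) = (\<Sum>x\<in>seqs n. marg M w x * (if E x then 1 else 0))"
proof -
  have "joint_prob M n w (\<lambda>x y. E x) = (\<Sum>x\<in>seqs n. \<integral>y. w x y * (if E x then 1 else 0) \<partial>M)"
    unfolding joint_prob_def by (rule Bochner_Integration.integral_sum) (auto intro: w_int)
  also have "\<dots> = (\<Sum>x\<in>seqs n. marg M w x * (if E x then 1 else 0))"
    unfolding marg_def by (intro sum.cong refl) simp
  finally show ?thesis .
qed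

lemma fail_imp:
  assumes x: "x \<in> seqs n" and f: "decoder M n w A B (A x) (B x) \<noteq> x"
  shows "\<exists>x'\<in>{x'\<in>seqs n. marg M w x \<le> marg M w x'} - {x}. A x' = A x \<and> B x' = B x"
proof -
  define P where "P z = (z \<in> seqs n \<and> A z = A x \<and> B z = B x)" for z
  define K where "K = {z. P z}"
  have finK: "finite K" unfolding K_def P_def by (rule finite_subset[OF _ finite_seqs[of n]]) auto
  have xK: "x \<in> K" using x by (simp add: K_def P_def)
  define m where "m = Max (marg M w ` K)"
  have "m \<in> marg M w ` K" unfolding m_def using finK xK by (intro Max_in) auto
  then obtain z0 where z0: "z0 \<in> K" "marg M w z0 = m" by auto
  have "P (arg_max (marg M w) P) \<and> marg M w x \<le> marg M w (arg_max (marg M w) P)"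
  proof (rule arg_maxI[where x=z0])
    show "P z0" using z0 by (simp add: K_def)
    show "\<not> marg M w y > marg M w z0" if "P y" for y
    proof -
      have "marg M w y \<le> m" unfolding m_def using that finK by (intro Max_ge) (auto simp: K_def)
      then show ?thesis using z0 by simp
    qed
    show "P z \<and> marg M w x \<le> marg M w z" if "P z" "\<forall>y. P y \<longrightarrow> \<not> marg M w y > marg M w z" for z
      using that xK by (auto simp: K_def not_less)
  qed
  moreover have "decoder M n w A B (A x) (B x) = arg_max (marg M w) P"
    unfolding decoder_def P_def ..
  ultimately show ?thesis using f by (auto simp: P_def intro!: bexI[of _ "arg_max (marg M w) P"])
qed

end


context chan begin

lemma exp_E1f:
  fixes Q :: "(('x list \<Rightarrow> 'a) \<times> ('x list \<Rightarrow> 'b)) pmf"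
  assumes y: "y \<in> space M"
  shows "measure_pmf.expectation Q (\<lambda>ab. E1f M n w (fst ab) (snd ab) y)
     = (\<Sum>x\<in>seqs n. w x y * measure_pmf.prob Q {ab. decoder M n w (fst ab) (snd ab) (fst ab x) (snd ab x) \<noteq> x})"
proof -
  have "measure_pmf.expectation Q (\<lambda>ab. E1f M n w (fst ab) (snd ab) y)
     = (\<Sum>x\<in>seqs n. measure_pmf.expectation Q (\<lambda>ab. w x y * (if decoder M n w (fst ab) (snd ab) (fst ab x) (snd ab x) \<noteq> x then 1 else 0)))"
    unfolding E1f_def
  proof (rule Bochner_Integration.integral_sum)
    fix x
    show "integrable Q (\<lambda>ab. w x y * (if decoder M n w (fst ab) (snd ab) (fst ab x) (snd ab x) \<noteq> x then 1 else 0))"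
      by (rule pmf_integrable_bnd[where C="\<bar>w x y\<bar>"]) auto
  qed
  also have "\<dots> = (\<Sum>x\<in>seqs n. w x y * measure_pmf.prob Q {ab. decoder M n w (fst ab) (snd ab) (fst ab x) (snd ab x) \<noteq> x})"
    by (intro sum.cong refl) (simp add: pmf_exp_ind)
  finally show ?thesis .
qed

lemma E1_exp:
  fixes pA :: "('x list \<Rightarrow> 'a) pmf" and pB :: "('x list \<Rightarrow> 'b) pmf"
  assumes hA: "\<forall>u\<in>seqs n. (\<Sum>u'\<in>{u'\<in>seqs n. u' \<noteq> u \<and> measure_pmf.prob pA {A. A u = A u'} > qa}.
               measure_pmf.prob pA {A. A u = A u'}) \<le> bA"
    and hB: "\<forall>u\<in>seqs n. (\<Sum>u'\<in>{u'\<in>seqs n. u' \<noteq> u \<and> measure_pmf.prob pB {B. B u = B u'} > qb}.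
               measure_pmf.prob pB {B. B u = B u'}) \<le> bB"
    and t: "t > 0"
  shows "measure_pmf.expectation (pair_pmf pA pB) (\<lambda>ab. \<integral>y. E1f M n w (fst ab) (snd ab) y \<partial>M)
     \<le> (\<Sum>x\<in>seqs n. marg M w x * (if marg M w x \<le> t then 1 else 0)) + (bA + bB + \<bar>qa * qb\<bar> / t)"
proof -
  define Q where "Q = pair_pmf pA pB"
  define pf where "pf x = measure_pmf.prob Q {ab. decoder M n w (fst ab) (snd ab) (fst ab x) (snd ab x) \<noteq> x}" for x
  define eps where "eps = bA + bB + \<bar>qa * qb\<bar> / t"
  obtain u0 :: "'x list" where u0: "u0 \<in> seqs n" using seqs_ne by blast
  have bA0: "bA \<ge> 0"
  proof -
    have "0 \<le> (\<Sum>u'\<in>{u'\<in>seqs n. u' \<noteq> u0 \<and> measure_pmf.prob pA {A. A u0 = A u'} > qa}.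
               measure_pmf.prob pA {A. A u0 = A u'})" by (rule sum_nonneg) simp
    also have "\<dots> \<le> bA" using hA u0 by blast
    finally show ?thesis .
  qed
  have bB0: "bB \<ge> 0"
  proof -
    have "0 \<le> (\<Sum>u'\<in>{u'\<in>seqs n. u' \<noteq> u0 \<and> measure_pmf.prob pB {B. B u0 = B u'} > qb}.
               measure_pmf.prob pB {B. B u0 = B u'})" by (rule sum_nonneg) simp
    also have "\<dots> \<le> bB" using hB u0 by blast
    finally show ?thesis .
  qed
  have eps0: "eps \<ge> 0" unfolding eps_def using bA0 bB0 t by auto
  have pfb: "pf x \<le> (if marg M w x \<le> t then 1 else 0) + eps" if x: "x \<in> seqs n" for x
  proof (cases "marg M w x \<le> t")
    case True
    have "pf x \<le> 1" unfolding pf_def by simp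
    then show ?thesis using True eps0 by simp
  next
    case False
    define G where "G = {x'\<in>seqs n. marg M w x \<le> marg M w x'}"
    have GS: "G \<subseteq> seqs n" unfolding G_def by auto
    have finG: "finite G" using GS finite_subset finite_seqs by blast
    have "pf x \<le> measure_pmf.prob (pair_pmf pA pB) {(A,B). \<exists>x'\<in>G-{x}. A x' = A x \<and> B x' = B x}"
      unfolding pf_def Q_def
    proof (rule measure_pmf.finite_measure_mono)
      show "{ab. decoder M n w (fst ab) (snd ab) (fst ab x) (snd ab x) \<noteq> x}
            \<subseteq> {(A,B). \<exists>x'\<in>G-{x}. A x' = A x \<and> B x' = B x}"
        using fail_imp[OF x] unfolding G_def by fastforce
    qed simp
    also have "\<dots> \<le> bA + bB + real (card G) * \<bar>qa * qb\<bar>"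
      by (rule collide_bound[OF finite_seqs GS]) (use hA hB x in auto)
    moreover have "real (card G) * \<bar>qa * qb\<bar> \<le> \<bar>qa * qb\<bar> / t"
    proof -
      have "real (card G) * marg M w x \<le> (\<Sum>x'\<in>G. marg M w x')"
        using sum_bounded_below[of G "marg M w x" "marg M w"] by (auto simp: G_def)
      also have "\<dots> \<le> (\<Sum>x'\<in>seqs n. marg M w x')"
        using GS by (intro sum_mono2) (auto simp: marg_nonneg)
      finally have "real (card G) * marg M w x \<le> 1" using marg_sum by simp
      moreover have "t < marg M w x" using False by simp
      ultimately have "real (card G) * t \<le> 1"
        by (smt (verit) mult_left_mono of_nat_0_le_iff)
      then have "real (card G) \<le> 1 / t" using t by (simp add: field_simps)
      then have "real (card G) * \<bar>qa * qb\<bar> \<le> 1 / t * \<bar>qa * qb\<bar>"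
        by (intro mult_right_mono) auto
      then show ?thesis by simp
    qed
    ultimately show ?thesis using False unfolding eps_def by (simp only: if_False)
  qed
  have "measure_pmf.expectation Q (\<lambda>ab. \<integral>y. E1f M n w (fst ab) (snd ab) y \<partial>M)
      = (\<integral>y. measure_pmf.expectation Q (\<lambda>ab. E1f M n w (fst ab) (snd ab) y) \<partial>M)"
    by (rule pmf_fubini[OF M, where C=1]) (auto simp: E1f_meas E1f_bnd abs_le_iff)
  also have "\<dots> = (\<integral>y. (\<Sum>x\<in>seqs n. w x y * pf x) \<partial>M)"
    by (rule Bochner_Integration.integral_cong) (auto simp: exp_E1f pf_def)
  also have "\<dots> = (\<Sum>x\<in>seqs n. marg M w x * pf x)"
    unfolding marg_def
    by (subst Bochner_Integration.integral_sum) (auto intro: w_int)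
  also have "\<dots> \<le> (\<Sum>x\<in>seqs n. marg M w x * ((if marg M w x \<le> t then 1 else 0) + eps))"
    by (intro sum_mono mult_left_mono pfb marg_nonneg)
  also have "\<dots> = (\<Sum>x\<in>seqs n. marg M w x * (if marg M w x \<le> t then 1 else 0)) + eps"
  proof -
    have "(\<Sum>x\<in>seqs n. marg M w x * ((if marg M w x \<le> t then 1 else 0) + eps))
       = (\<Sum>x\<in>seqs n. marg M w x * (if marg M w x \<le> t then 1 else 0)) + (\<Sum>x\<in>seqs n. marg M w x) * eps"
      by (simp add: distrib_left sum.distrib sum_distrib_right)
    then show ?thesis using marg_sum by simp
  qed
  finally show ?thesis unfolding Q_def eps_def .
qed

end


lemma pmf_fubini_int:
  fixes p :: "'a pmf" and M :: "'y measure" and g :: "'a \<Rightarrow> 'y \<Rightarrow> real"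
  assumes M: "prob_space M"
    and meas: "\<And>a. g a \<in> borel_measurable M"
    and bnd: "\<And>a y. a \<in> set_pmf p \<Longrightarrow> y \<in> space M \<Longrightarrow> \<bar>g a y\<bar> \<le> C"
  shows "integrable M (\<lambda>y. measure_pmf.expectation p (\<lambda>a. g a y))"
proof -
  interpret A: prob_space "restrict_space p p"
    by (intro prob_space_restrict_space measure_pmf.emeasure_eq_1_AE)
       (auto simp: AE_measure_pmf_iff)
  interpret Mp: prob_space M by (rule M)
  interpret AB: pair_prob_space M "restrict_space p p"
    by unfold_locales
  have "integrable (M \<Otimes>\<^sub>M restrict_space p p) (\<lambda>(y,a). g a y)"
    by (auto intro!: AB.integrable_const_bound[where B=C] measurable_pair_restrict_pmf2 meas
             simp: space_pair_measure space_restrict_space bnd)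
  from AB.integrable_fst'[OF this]
  have "integrable M (\<lambda>y. \<integral>a. g a y \<partial>restrict_space p p)" by simp
  moreover have "(\<integral>a. g a y \<partial>restrict_space p p) = measure_pmf.expectation p (\<lambda>a. g a y)" for y
    by (rule integral_pmf_restrict[symmetric]) (simp add: borel_measurable_count_space)
  ultimately show ?thesis by simp
qed



lemma e2_split:
  fixes S :: "'u set" and I :: "'c set" and w :: "'u \<Rightarrow> real" and s :: real
  assumes fin: "finite S" "finite I" and AS: "A ` S \<subseteq> I" and Mc: "card I > 0"
    and w: "\<And>x. x \<in> S \<Longrightarrow> w x \<ge> 0" and ws: "(\<Sum>x\<in>S. w x) = 1"
  defines "T \<equiv> {x\<in>S. w x \<le> s}"
  defines "\<tau> \<equiv> (\<Sum>x\<in>T. w x)"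
  shows "(\<Sum>c\<in>I. \<bar>(\<Sum>x\<in>{x\<in>S. A x = c}. w x) - 1 / real (card I)\<bar>)
     \<le> (\<Sum>c\<in>I. \<bar>(\<Sum>x\<in>{x\<in>T. A x = c}. w x) - \<tau> / real (card I)\<bar>) + 2 * (1 - \<tau>)"
proof -
  define m where "m = real (card I)"
  have m0: "m > 0" using Mc by (simp add: m_def)
  have TS: "T \<subseteq> S" unfolding T_def by auto
  have finT: "finite T" using TS fin finite_subset by blast
  have tau_le: "\<tau> \<le> 1"
  proof -
    have "sum w T \<le> sum w S" by (rule sum_mono2[OF fin(1) TS]) (use w TS in auto)
    then show ?thesis using ws unfolding \<tau>_def by simp
  qed
  have rest: "(\<Sum>x\<in>S - T. w x) = 1 - \<tau>"
    using sum_diff[OF fin(1) TS, of w] ws unfolding \<tau>_def by simp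
  define Z1 where "Z1 c = (\<Sum>x\<in>{x\<in>T. A x = c}. w x)" for c
  define Z2 where "Z2 c = (\<Sum>x\<in>{x\<in>S - T. A x = c}. w x)" for c
  have Zsplit: "(\<Sum>x\<in>{x\<in>S. A x = c}. w x) = Z1 c + Z2 c" for c
  proof -
    have "{x\<in>S. A x = c} = {x\<in>T. A x = c} \<union> {x\<in>S - T. A x = c}" using TS by auto
    moreover have "{x\<in>T. A x = c} \<inter> {x\<in>S - T. A x = c} = {}" by auto
    ultimately show ?thesis unfolding Z1_def Z2_def using fin finT
      by (simp add: sum.union_disjoint)
  qed
  have Z2nn: "Z2 c \<ge> 0" for c unfolding Z2_def using w by (auto intro!: sum_nonneg)
  have "(\<Sum>c\<in>I. \<bar>(\<Sum>x\<in>{x\<in>S. A x = c}. w x) - 1 / m\<bar>)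
      \<le> (\<Sum>c\<in>I. \<bar>Z1 c - \<tau> / m\<bar> + Z2 c + (1 - \<tau>) / m)"
  proof (intro sum_mono)
    fix c
    have "(\<Sum>x\<in>{x\<in>S. A x = c}. w x) - 1 / m = (Z1 c - \<tau> / m) + Z2 c - (1 - \<tau>) / m"
      using Zsplit[of c] m0 by (simp add: field_simps)
    moreover have "(1 - \<tau>) / m \<ge> 0" using tau_le m0 by simp
    ultimately show "\<bar>(\<Sum>x\<in>{x\<in>S. A x = c}. w x) - 1 / m\<bar> \<le> \<bar>Z1 c - \<tau> / m\<bar> + Z2 c + (1 - \<tau>) / m"
      using Z2nn[of c] by (smt (verit))
  qed
  also have "\<dots> = (\<Sum>c\<in>I. \<bar>Z1 c - \<tau> / m\<bar>) + (\<Sum>c\<in>I. Z2 c) + m * ((1 - \<tau>) / m)"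
    by (simp add: sum.distrib m_def)
  also have "(\<Sum>c\<in>I. Z2 c) = 1 - \<tau>"
    unfolding Z2_def using sum_cosets[of "S - T" I A w] fin AS rest by auto
  also have "m * ((1 - \<tau>) / m) = 1 - \<tau>" using m0 by simp
  finally show ?thesis unfolding m_def Z1_def by simp
qed

lemma amgm_sum:
  fixes I :: "'c set" and a :: "'c \<Rightarrow> real"
  assumes Mc: "card I > 0" and eta: "\<eta> > 0"
  shows "(\<Sum>c\<in>I. \<bar>a c\<bar>) \<le> real (card I) / (2 * \<eta>) * (\<Sum>c\<in>I. (a c)^2) + \<eta> / 2"
proof -
  define m where "m = real (card I)"
  have m0: "m > 0" using Mc by (simp add: m_def)
  have each: "\<bar>a c\<bar> \<le> m / (2 * \<eta>) * (a c)^2 + \<eta> / (2 * m)" for c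
  proof -
    have "0 \<le> (m * \<bar>a c\<bar> - \<eta>)^2" by simp
    then have "2 * m * \<eta> * \<bar>a c\<bar> \<le> m^2 * (a c)^2 + \<eta>^2"
      by (simp add: power2_eq_square algebra_simps)
    then have "\<bar>a c\<bar> \<le> (m^2 * (a c)^2 + \<eta>^2) / (2 * m * \<eta>)"
      using m0 eta by (simp add: field_simps)
    also have "\<dots> = m / (2 * \<eta>) * (a c)^2 + \<eta> / (2 * m)"
      using m0 eta by (simp add: field_simps power2_eq_square)
    finally show ?thesis .
  qed
  have "(\<Sum>c\<in>I. \<bar>a c\<bar>) \<le> (\<Sum>c\<in>I. m / (2 * \<eta>) * (a c)^2 + \<eta> / (2 * m))"
    by (intro sum_mono each)
  also have "\<dots> = m / (2 * \<eta>) * (\<Sum>c\<in>I. (a c)^2) + m * (\<eta> / (2 * m))"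
    by (simp add: sum.distrib sum_distrib_left m_def)
  also have "m * (\<eta> / (2 * m)) = \<eta> / 2" using m0 by simp
  finally show ?thesis unfolding m_def .
qed

lemma sq_expand:
  fixes I :: "'c set" and Z :: "'c \<Rightarrow> real"
  assumes Mc: "card I > 0" and sZ: "(\<Sum>c\<in>I. Z c) = \<tau>"
  shows "(\<Sum>c\<in>I. (Z c - \<tau> / real (card I))^2) = (\<Sum>c\<in>I. (Z c)^2) - \<tau>^2 / real (card I)"
proof -
  define m where "m = real (card I)"
  have m0: "m > 0" using Mc by (simp add: m_def)
  have "(\<Sum>c\<in>I. (Z c - \<tau> / m)^2) = (\<Sum>c\<in>I. (Z c)^2 - 2 * (\<tau> / m) * Z c + (\<tau> / m)^2)"
    by (intro sum.cong refl) (simp add: power2_eq_square algebra_simps)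
  also have "\<dots> = (\<Sum>c\<in>I. (Z c)^2) - 2 * (\<tau> / m) * (\<Sum>c\<in>I. Z c) + m * (\<tau> / m)^2"
    by (simp add: sum.distrib sum_subtractf sum_distrib_left m_def)
  also have "\<dots> = (\<Sum>c\<in>I. (Z c)^2) - \<tau>^2 / m"
    using m0 sZ by (simp add: power2_eq_square field_simps)
  finally show ?thesis unfolding m_def .
qed

lemma sq_double:
  fixes T :: "'u set" and I :: "'c set" and w :: "'u \<Rightarrow> real"
  assumes fin: "finite T" "finite I" and AT: "A ` T \<subseteq> I"
  shows "(\<Sum>c\<in>I. (\<Sum>x\<in>{x\<in>T. A x = c}. w x)^2)
       = (\<Sum>x\<in>T. \<Sum>x'\<in>T. w x * w x' * (if A x = A x' then 1 else 0))"
proof -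
  have "(\<Sum>c\<in>I. (\<Sum>x\<in>{x\<in>T. A x = c}. w x)^2)
      = (\<Sum>c\<in>I. \<Sum>x\<in>{x\<in>T. A x = c}. w x * (\<Sum>x'\<in>T. w x' * (if A x = A x' then 1 else 0)))"
  proof (intro sum.cong refl)
    fix c
    have "(\<Sum>x\<in>{x\<in>T. A x = c}. w x)^2 = (\<Sum>x\<in>{x\<in>T. A x = c}. w x * (\<Sum>x'\<in>{x'\<in>T. A x' = c}. w x'))"
      by (simp add: power2_eq_square sum_distrib_right)
    also have "\<dots> = (\<Sum>x\<in>{x\<in>T. A x = c}. w x * (\<Sum>x'\<in>T. w x' * (if A x = A x' then 1 else 0)))"
    proof (intro sum.cong refl)
      fix x assume "x \<in> {x\<in>T. A x = c}"
      then have "A x = c" by simp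
      then show "w x * (\<Sum>x'\<in>{x'\<in>T. A x' = c}. w x') = w x * (\<Sum>x'\<in>T. w x' * (if A x = A x' then 1 else 0))"
      proof -
        have "(\<Sum>x'\<in>{x'\<in>T. A x' = c}. w x') = (\<Sum>x'\<in>T. if A x' = c then w x' else 0)"
          by (rule sum.inter_filter[OF fin(1)])
        also have "\<dots> = (\<Sum>x'\<in>T. w x' * (if A x = A x' then 1 else 0))"
          using \<open>A x = c\<close> by (intro sum.cong refl) auto
        finally show ?thesis by simp
      qed
    qed
    finally show "(\<Sum>x\<in>{x\<in>T. A x = c}. w x)^2 = \<dots>" .
  qed
  also have "\<dots> = (\<Sum>x\<in>T. w x * (\<Sum>x'\<in>T. w x' * (if A x = A x' then 1 else 0)))"
    by (rule sum.group[OF fin AT])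
  also have "\<dots> = (\<Sum>x\<in>T. \<Sum>x'\<in>T. w x * w x' * (if A x = A x' then 1 else 0))"
    by (simp add: sum_distrib_left mult.assoc)
  finally show ?thesis .
qed



lemma hashsum_bound:
  fixes pA :: "('u \<Rightarrow> 'a) pmf" and S T :: "'u set" and w :: "'u \<Rightarrow> real"
  assumes fin: "finite S" and TS: "T \<subseteq> S" and w: "\<And>x. x \<in> T \<Longrightarrow> 0 \<le> w x"
    and ws: "\<And>x. x \<in> T \<Longrightarrow> w x \<le> s"
    and hA: "\<forall>u\<in>S. (\<Sum>u'\<in>{u'\<in>S. u' \<noteq> u \<and> measure_pmf.prob pA {A. A u = A u'} > qa}.
               measure_pmf.prob pA {A. A u = A u'}) \<le> bA"
  shows "(\<Sum>x\<in>T. \<Sum>x'\<in>T. w x * w x' * measure_pmf.prob pA {A. A x = A x'})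
       \<le> (\<Sum>x\<in>T. w x) * (s * (1 + bA) + max qa 0 * (\<Sum>x\<in>T. w x))"
proof -
  define P where "P x x' = measure_pmf.prob pA {A. A x = A x'}" for x x'
  define \<tau> where "\<tau> = (\<Sum>x\<in>T. w x)"
  have finT: "finite T" using fin TS finite_subset by blast
  have P01: "0 \<le> P x x'" "P x x' \<le> 1" for x x' by (auto simp: P_def)
  have inner: "(\<Sum>x'\<in>T. w x' * P x x') \<le> s * (1 + bA) + max qa 0 * \<tau>" if x: "x \<in> T" for x
  proof -
    have s0: "s \<ge> 0" using w[OF x] ws[OF x] by simp
    define H where "H = {u'\<in>S. u' \<noteq> x \<and> P x u' > qa}"
    have "(\<Sum>x'\<in>T. w x' * P x x') = w x * P x x + (\<Sum>x'\<in>T - {x}. w x' * P x x')"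
      using x finT by (simp add: sum.remove)
    also have "w x * P x x \<le> s"
      using w[OF x] ws[OF x] P01[of x x] by (simp add: mult_le_one order_trans[OF mult_right_le_one_le])
    also have "(\<Sum>x'\<in>T - {x}. w x' * P x x') \<le>
        (\<Sum>x'\<in>T - {x}. (if x' \<in> H then s * P x x' else 0) + w x' * max qa 0)"
    proof (intro sum_mono)
      fix x' assume x': "x' \<in> T - {x}"
      show "w x' * P x x' \<le> (if x' \<in> H then s * P x x' else 0) + w x' * max qa 0"
      proof (cases "x' \<in> H")
        case True
        have "w x' * P x x' \<le> s * P x x'" using ws[of x'] x' P01 by (intro mult_right_mono) auto
        moreover have "0 \<le> w x' * max qa 0" using w[of x'] x' by simp
        ultimately show ?thesis using True by simp
      next
        case False
        then have "P x x' \<le> max qa 0" using x' TS by (auto simp: H_def)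
        then have "w x' * P x x' \<le> w x' * max qa 0" using w[of x'] x' by (intro mult_left_mono) auto
        then show ?thesis using False by simp
      qed
    qed
    also have "\<dots> = s * (\<Sum>x'\<in>(T - {x}) \<inter> H. P x x') + max qa 0 * (\<Sum>x'\<in>T - {x}. w x')"
    proof -
      have a: "(\<Sum>x'\<in>T - {x}. (if x' \<in> H then s * P x x' else 0) + w x' * max qa 0)
          = (\<Sum>x'\<in>T - {x}. (if x' \<in> H then s * P x x' else 0)) + (\<Sum>x'\<in>T - {x}. w x' * max qa 0)"
        by (rule sum.distrib)
      have b: "(\<Sum>x'\<in>T - {x}. (if x' \<in> H then s * P x x' else 0)) = (\<Sum>x'\<in>(T - {x}) \<inter> H. s * P x x')"
        using finT by (simp add: sum.inter_restrict)
      show ?thesis unfolding a b by (simp add: sum_distrib_left sum_distrib_right mult.commute)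
    qed
    also have "\<dots> \<le> s * bA + max qa 0 * \<tau>"
    proof -
      have "(\<Sum>x'\<in>(T - {x}) \<inter> H. P x x') \<le> (\<Sum>x'\<in>H. P x x')"
        using fin by (intro sum_mono2) (auto simp: H_def P01)
      also have "\<dots> \<le> bA" using hA x TS unfolding H_def P_def by auto
      finally have 1: "s * (\<Sum>x'\<in>(T - {x}) \<inter> H. P x x') \<le> s * bA" using s0 by (intro mult_left_mono)
      have "(\<Sum>x'\<in>T - {x}. w x') \<le> \<tau>" unfolding \<tau>_def using finT w by (intro sum_mono2) auto
      then have 2: "max qa 0 * (\<Sum>x'\<in>T - {x}. w x') \<le> max qa 0 * \<tau>" by (intro mult_left_mono) auto
      show ?thesis using 1 2 by linarith
    qed
    finally show ?thesis by (simp add: algebra_simps)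
  qed
  have "(\<Sum>x\<in>T. \<Sum>x'\<in>T. w x * w x' * P x x') = (\<Sum>x\<in>T. w x * (\<Sum>x'\<in>T. w x' * P x x'))"
    by (simp add: sum_distrib_left mult.assoc)
  also have "\<dots> \<le> (\<Sum>x\<in>T. w x * (s * (1 + bA) + max qa 0 * \<tau>))"
    by (intro sum_mono mult_left_mono inner w)
  also have "\<dots> = \<tau> * (s * (1 + bA) + max qa 0 * \<tau>)"
    by (simp add: \<tau>_def sum_distrib_right)
  finally show ?thesis unfolding P_def \<tau>_def .
qed



context chan begin

lemma E2_pointwise:
  fixes pA :: "('x list \<Rightarrow> 'a) pmf" and I :: "'a set"
  assumes hA: "\<forall>u\<in>seqs n. (\<Sum>u'\<in>{u'\<in>seqs n. u' \<noteq> u \<and> measure_pmf.prob pA {A. A u = A u'} > qa}.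
               measure_pmf.prob pA {A. A u = A u'}) \<le> bA"
    and I: "finite I" "card I > 0" and AS: "\<And>A. A \<in> set_pmf pA \<Longrightarrow> A ` seqs n \<subseteq> I"
    and eta: "\<eta> > 0" and s0: "s \<ge> 0" and y: "y \<in> space M"
  shows "measure_pmf.expectation pA (\<lambda>A. E2f n w I A y)
     \<le> (real (card I) * s * (1 + bA) + \<bar>real (card I) * max qa 0 - 1\<bar>) / (2 * \<eta>) + \<eta> / 2
        + 2 * (\<Sum>x\<in>seqs n. w x y * (if w x y > s then 1 else 0))"
proof -
  define S where "S = (seqs n :: 'x list set)"
  define m where "m = real (card I)"
  have m0: "m > 0" using I by (simp add: m_def)
  define T where "T = {x\<in>S. w x y \<le> s}"
  define \<tau> where "\<tau> = (\<Sum>x\<in>T. w x y)"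
  have TS: "T \<subseteq> S" unfolding T_def by auto
  have finS: "finite S" unfolding S_def by simp
  have finT: "finite T" using TS finS finite_subset by blast
  have wn: "x \<in> S \<Longrightarrow> w x y \<ge> 0" for x using w_nonneg[OF y] .
  have ws: "(\<Sum>x\<in>S. w x y) = 1" unfolding S_def by (rule w_sum[OF y])
  have tau0: "\<tau> \<ge> 0" unfolding \<tau>_def using wn TS by (auto intro!: sum_nonneg)
  have tau1: "\<tau> \<le> 1"
  proof -
    have "sum (\<lambda>x. w x y) T \<le> sum (\<lambda>x. w x y) S" by (rule sum_mono2[OF finS TS]) (use wn TS in auto)
    then show ?thesis using ws unfolding \<tau>_def by simp
  qed
  have bad: "(\<Sum>x\<in>S. w x y * (if w x y > s then 1 else 0)) = 1 - \<tau>"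
  proof -
    have "(\<Sum>x\<in>S. w x y * (if w x y > s then 1 else 0)) = (\<Sum>x\<in>S - T. w x y)"
    proof -
      have "(\<Sum>x\<in>S - T. w x y) = (\<Sum>x\<in>{x\<in>S. w x y > s}. w x y)"
        unfolding T_def by (intro sum.cong) auto
      also have "\<dots> = (\<Sum>x\<in>S. if w x y > s then w x y else 0)" by (rule sum.inter_filter[OF finS])
      finally show ?thesis by (simp add: if_distrib cong: if_cong)
    qed
    also have "\<dots> = 1 - \<tau>" using sum_diff[OF finS TS, of "\<lambda>x. w x y"] ws unfolding \<tau>_def by simp
    finally show ?thesis .
  qed
  define F where "F A = (\<Sum>x\<in>T. \<Sum>x'\<in>T. w x y * w x' y * (if A x = A x' then 1 else 0))" for A :: "'x list \<Rightarrow> 'a"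
  have pw: "E2f n w I A y \<le> m / (2 * \<eta>) * (F A - \<tau>^2 / m) + \<eta> / 2 + 2 * (1 - \<tau>)"
    if A: "A \<in> set_pmf pA" for A
  proof -
    have AS': "A ` S \<subseteq> I" using AS[OF A] by (simp add: S_def)
    have AT: "A ` T \<subseteq> I" using AS' TS by auto
    have "E2f n w I A y \<le> (\<Sum>c\<in>I. \<bar>(\<Sum>x\<in>{x\<in>T. A x = c}. w x y) - \<tau> / m\<bar>) + 2 * (1 - \<tau>)"
      unfolding E2f_def T_def \<tau>_def m_def S_def[symmetric]
      by (rule e2_split[OF finS I(1) AS' I(2)]) (auto simp: wn ws)
    also have "(\<Sum>c\<in>I. \<bar>(\<Sum>x\<in>{x\<in>T. A x = c}. w x y) - \<tau> / m\<bar>)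
        \<le> m / (2 * \<eta>) * (\<Sum>c\<in>I. ((\<Sum>x\<in>{x\<in>T. A x = c}. w x y) - \<tau> / m)^2) + \<eta> / 2"
      unfolding m_def by (rule amgm_sum[OF I(2) eta])
    also have "(\<Sum>c\<in>I. ((\<Sum>x\<in>{x\<in>T. A x = c}. w x y) - \<tau> / m)^2)
        = (\<Sum>c\<in>I. (\<Sum>x\<in>{x\<in>T. A x = c}. w x y)^2) - \<tau>^2 / m"
      unfolding m_def
      by (rule sq_expand[OF I(2)]) (simp add: sum_cosets[OF finT I(1) AT] \<tau>_def)
    also have "(\<Sum>c\<in>I. (\<Sum>x\<in>{x\<in>T. A x = c}. w x y)^2) = F A"
      unfolding F_def by (rule sq_double[OF finT I(1) AT])
    finally show ?thesis by simp
  qed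
  have ind_int: "integrable pA (\<lambda>A. if A x = A x' then 1 else (0::real))" for x x'
    by (rule pmf_integrable_bnd[where C=1]) auto
  have Fint: "integrable pA F"
    unfolding F_def by (intro Bochner_Integration.integrable_sum Bochner_Integration.integrable_mult_right ind_int)
  have EF: "measure_pmf.expectation pA F = (\<Sum>x\<in>T. \<Sum>x'\<in>T. w x y * w x' y * measure_pmf.prob pA {A. A x = A x'})"
  proof -
    have "measure_pmf.expectation pA F = (\<Sum>x\<in>T. measure_pmf.expectation pA (\<lambda>A. \<Sum>x'\<in>T. w x y * w x' y * (if A x = A x' then 1 else 0)))"
      unfolding F_def
    proof (rule Bochner_Integration.integral_sum)
      fix x show "integrable pA (\<lambda>A. \<Sum>x'\<in>T. w x y * w x' y * (if A x = A x' then 1 else 0))"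
        by (intro Bochner_Integration.integrable_sum Bochner_Integration.integrable_mult_right ind_int)
    qed
    also have "\<dots> = (\<Sum>x\<in>T. \<Sum>x'\<in>T. w x y * w x' y * measure_pmf.prob pA {A. A x = A x'})"
    proof (intro sum.cong refl)
      fix x
      have "measure_pmf.expectation pA (\<lambda>A. \<Sum>x'\<in>T. w x y * w x' y * (if A x = A x' then 1 else 0))
          = (\<Sum>x'\<in>T. measure_pmf.expectation pA (\<lambda>A. w x y * w x' y * (if A x = A x' then 1 else 0)))"
      proof (rule Bochner_Integration.integral_sum)
        fix x' show "integrable pA (\<lambda>A. w x y * w x' y * (if A x = A x' then 1 else 0))"
          by (intro Bochner_Integration.integrable_mult_right ind_int)
      qed
      also have "\<dots> = (\<Sum>x'\<in>T. w x y * w x' y * measure_pmf.prob pA {A. A x = A x'})"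
        by (intro sum.cong refl) (simp add: pmf_exp_ind)
      finally show "measure_pmf.expectation pA (\<lambda>A. \<Sum>x'\<in>T. w x y * w x' y * (if A x = A x' then 1 else 0))
          = (\<Sum>x'\<in>T. w x y * w x' y * measure_pmf.prob pA {A. A x = A x'})" .
    qed
    finally show ?thesis .
  qed
  have hs: "(\<Sum>x\<in>T. \<Sum>x'\<in>T. w x y * w x' y * measure_pmf.prob pA {A. A x = A x'})
      \<le> \<tau> * (s * (1 + bA) + max qa 0 * \<tau>)"
    unfolding \<tau>_def
  proof (rule hashsum_bound[OF finS TS])
    show "\<And>x. x \<in> T \<Longrightarrow> 0 \<le> w x y" using wn TS by blast
    show "\<And>x. x \<in> T \<Longrightarrow> w x y \<le> s" by (simp add: T_def)
    show "\<forall>u\<in>S. (\<Sum>u'\<in>{u'\<in>S. u' \<noteq> u \<and> measure_pmf.prob pA {A. A u = A u'} > qa}.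
               measure_pmf.prob pA {A. A u = A u'}) \<le> bA" using hA unfolding S_def .
  qed
  obtain u0 :: "'x list" where u0: "u0 \<in> seqs n" using seqs_ne by blast
  have bA0: "bA \<ge> 0"
  proof -
    have "0 \<le> (\<Sum>u'\<in>{u'\<in>seqs n. u' \<noteq> u0 \<and> measure_pmf.prob pA {A. A u0 = A u'} > qa}.
               measure_pmf.prob pA {A. A u0 = A u'})" by (rule sum_nonneg) simp
    also have "\<dots> \<le> bA" using hA u0 by blast
    finally show ?thesis .
  qed
  have E2int: "integrable pA (\<lambda>A. E2f n w I A y)"
  proof (rule pmf_integrable_bnd[where C=2])
    fix A assume "A \<in> set_pmf pA"
    from E2f_bnd[OF I(1) AS[OF this] y] show "\<bar>E2f n w I A y\<bar> \<le> 2" by simp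
  qed
  have "measure_pmf.expectation pA (\<lambda>A. E2f n w I A y)
      \<le> measure_pmf.expectation pA (\<lambda>A. m / (2 * \<eta>) * (F A - \<tau>^2 / m) + \<eta> / 2 + 2 * (1 - \<tau>))"
  proof (rule integral_mono_AE)
    show "integrable pA (\<lambda>A. E2f n w I A y)" by (rule E2int)
    show "integrable pA (\<lambda>A. m / (2 * \<eta>) * (F A - \<tau>^2 / m) + \<eta> / 2 + 2 * (1 - \<tau>))"
      by (intro Bochner_Integration.integrable_add Bochner_Integration.integrable_mult_right
          Bochner_Integration.integrable_diff Fint measure_pmf.integrable_const)
    show "AE A in pA. E2f n w I A y \<le> m / (2 * \<eta>) * (F A - \<tau>^2 / m) + \<eta> / 2 + 2 * (1 - \<tau>)"
      using pw by (simp add: AE_measure_pmf_iff)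
  qed
  also have "\<dots> = m / (2 * \<eta>) * (measure_pmf.expectation pA F - \<tau>^2 / m) + \<eta> / 2 + 2 * (1 - \<tau>)"
    using Fint by simp
  also have "\<dots> \<le> m / (2 * \<eta>) * (s * (1 + bA) + \<bar>max qa 0 - 1 / m\<bar>) + \<eta> / 2 + 2 * (1 - \<tau>)"
  proof -
    have "measure_pmf.expectation pA F - \<tau>^2 / m \<le> \<tau> * (s * (1 + bA)) + (max qa 0 - 1/m) * \<tau>^2"
    proof -
      have "measure_pmf.expectation pA F \<le> \<tau> * (s * (1 + bA) + max qa 0 * \<tau>)" using EF hs by simp
      moreover have "\<tau> * (s * (1 + bA) + max qa 0 * \<tau>) - \<tau>^2 / m = \<tau> * (s * (1 + bA)) + (max qa 0 - 1/m) * \<tau>^2"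
        by (simp add: algebra_simps power2_eq_square)
      ultimately show ?thesis by linarith
    qed
    also have "\<dots> \<le> s * (1 + bA) + \<bar>max qa 0 - 1 / m\<bar>"
    proof -
      have "\<tau> * (s * (1 + bA)) \<le> 1 * (s * (1 + bA))"
        using tau1 s0 bA0 by (intro mult_right_mono) auto
      moreover have "(max qa 0 - 1/m) * \<tau>^2 \<le> \<bar>max qa 0 - 1 / m\<bar> * 1"
      proof -
        have "\<tau>^2 \<le> 1" using tau0 tau1 by (simp add: power_le_one)
        then have "\<bar>max qa 0 - 1 / m\<bar> * \<tau>^2 \<le> \<bar>max qa 0 - 1 / m\<bar> * 1"
          by (intro mult_left_mono) auto
        moreover have "(max qa 0 - 1/m) * \<tau>^2 \<le> \<bar>max qa 0 - 1 / m\<bar> * \<tau>^2"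
          by (intro mult_right_mono) auto
        ultimately show ?thesis by linarith
      qed
      ultimately show ?thesis by simp
    qed
    finally have "measure_pmf.expectation pA F - \<tau>^2 / m \<le> s * (1 + bA) + \<bar>max qa 0 - 1 / m\<bar>" .
    moreover have "m / (2 * \<eta>) \<ge> 0" using m0 eta by simp
    ultimately have "m / (2 * \<eta>) * (measure_pmf.expectation pA F - \<tau>^2 / m) \<le> m / (2 * \<eta>) * (s * (1 + bA) + \<bar>max qa 0 - 1 / m\<bar>)"
      by (intro mult_left_mono) auto
    then show ?thesis by linarith
  qed
  also have "m / (2 * \<eta>) * (s * (1 + bA) + \<bar>max qa 0 - 1 / m\<bar>)
      = (m * s * (1 + bA) + \<bar>m * max qa 0 - 1\<bar>) / (2 * \<eta>)"
  proof -
    have "m * \<bar>max qa 0 - 1 / m\<bar> = \<bar>m * max qa 0 - 1\<bar>"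
    proof -
      have "m * \<bar>max qa 0 - 1 / m\<bar> = \<bar>m\<bar> * \<bar>max qa 0 - 1 / m\<bar>" using m0 by simp
      also have "\<dots> = \<bar>m * (max qa 0 - 1 / m)\<bar>" by (rule abs_mult[symmetric])
      also have "m * (max qa 0 - 1 / m) = m * max qa 0 - 1" using m0 by (simp add: right_diff_distrib)
      finally show ?thesis .
    qed
    then show ?thesis by (simp add: add_divide_distrib distrib_left mult.assoc)
  qed
  finally show ?thesis using bad by (simp add: m_def S_def)
qed

end


context chan begin

lemma E2_exp:
  fixes pA :: "('x list \<Rightarrow> 'a) pmf" and I :: "'a set"
  assumes hA: "\<forall>u\<in>seqs n. (\<Sum>u'\<in>{u'\<in>seqs n. u' \<noteq> u \<and> measure_pmf.prob pA {A. A u = A u'} > qa}.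
               measure_pmf.prob pA {A. A u = A u'}) \<le> bA"
    and I: "finite I" "card I > 0" and AS: "\<And>A. A \<in> set_pmf pA \<Longrightarrow> A ` seqs n \<subseteq> I"
    and eta: "\<eta> > 0" and s0: "s \<ge> 0"
  shows "measure_pmf.expectation pA (\<lambda>A. \<integral>y. E2f n w I A y \<partial>M)
     \<le> (real (card I) * s * (1 + bA) + \<bar>real (card I) * max qa 0 - 1\<bar>) / (2 * \<eta>) + \<eta> / 2
        + 2 * joint_prob M n w (\<lambda>x y. w x y > s)"
proof -
  define K where "K = (real (card I) * s * (1 + bA) + \<bar>real (card I) * max qa 0 - 1\<bar>) / (2 * \<eta>) + \<eta> / 2"
  define G where "G y = (\<Sum>x\<in>seqs n. w x y * (if w x y > s then 1 else 0))" for y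
  have bnd: "\<bar>E2f n w I A y\<bar> \<le> 2" if "A \<in> set_pmf pA" "y \<in> space M" for A y
    using E2f_bnd[OF I(1) AS[OF that(1)] that(2)] by simp
  have Gmeas: "G \<in> borel_measurable M" unfolding G_def using w_meas by measurable
  have Gbnd: "\<bar>G y\<bar> \<le> 1" if y: "y \<in> space M" for y
  proof -
    have "G y \<le> (\<Sum>x\<in>seqs n. w x y)" unfolding G_def using w_nonneg[OF y]
      by (intro sum_mono) auto
    moreover have "0 \<le> G y" unfolding G_def using w_nonneg[OF y]
      by (intro sum_nonneg) auto
    ultimately show ?thesis using w_sum[OF y] by simp
  qed
  have Gint: "integrable M G"
    by (rule P.integrable_const_bound[where B=1]) (auto simp: Gbnd Gmeas)
  have "measure_pmf.expectation pA (\<lambda>A. \<integral>y. E2f n w I A y \<partial>M)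
      = (\<integral>y. measure_pmf.expectation pA (\<lambda>A. E2f n w I A y) \<partial>M)"
    by (rule pmf_fubini[OF M E2f_meas bnd])
  also have "\<dots> \<le> (\<integral>y. K + 2 * G y \<partial>M)"
  proof (rule integral_mono)
    show "integrable M (\<lambda>y. measure_pmf.expectation pA (\<lambda>A. E2f n w I A y))"
      by (rule pmf_fubini_int[OF M E2f_meas bnd])
    show "integrable M (\<lambda>y. K + 2 * G y)"
      by (intro Bochner_Integration.integrable_add Bochner_Integration.integrable_mult_right Gint P.integrable_const)
    show "measure_pmf.expectation pA (\<lambda>A. E2f n w I A y) \<le> K + 2 * G y" if "y \<in> space M" for y
      unfolding K_def G_def by (rule E2_pointwise[OF hA I AS eta s0 that])
  qed
  also have "\<dots> = K + 2 * (\<integral>y. G y \<partial>M)"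
    using Gint P.prob_space by simp
  also have "(\<integral>y. G y \<partial>M) = joint_prob M n w (\<lambda>x y. w x y > s)"
    unfolding G_def joint_prob_def ..
  finally show ?thesis unfolding K_def .
qed

lemma jp_mono:
  assumes Em: "\<And>x. (\<lambda>y. if E x y then 1 else 0::real) \<in> borel_measurable M"
    and Fm: "\<And>x. (\<lambda>y. if F x y then 1 else 0::real) \<in> borel_measurable M"
    and imp: "\<And>x y. x \<in> seqs n \<Longrightarrow> y \<in> space M \<Longrightarrow> w x y > 0 \<Longrightarrow> E x y \<Longrightarrow> F x y"
  shows "joint_prob M n w E \<le> joint_prob M n w F"
proof -
  have int: "integrable M (\<lambda>y. \<Sum>x\<in>seqs n. w x y * (if H x y then 1 else 0))"
    if Hm: "\<And>x. (\<lambda>y. if H x y then 1 else 0::real) \<in> borel_measurable M" for H :: "'x list \<Rightarrow> 'y \<Rightarrow> bool"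
  proof (rule P.integrable_const_bound[where B=1])
    show "(\<lambda>y. \<Sum>x\<in>seqs n. w x y * (if H x y then 1 else 0)) \<in> borel_measurable M"
      using w_meas Hm by measurable
    show "AE y in M. norm (\<Sum>x\<in>seqs n. w x y * (if H x y then 1 else 0)) \<le> 1"
    proof (rule AE_I2)
      fix y assume y: "y \<in> space M"
      have "(\<Sum>x\<in>seqs n. w x y * (if H x y then 1 else 0)) \<le> (\<Sum>x\<in>seqs n. w x y)"
        using w_nonneg[OF y] by (intro sum_mono) auto
      moreover have "0 \<le> (\<Sum>x\<in>seqs n. w x y * (if H x y then 1 else 0))"
        using w_nonneg[OF y] by (intro sum_nonneg) auto
      ultimately show "norm (\<Sum>x\<in>seqs n. w x y * (if H x y then 1 else 0)) \<le> 1"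
        using w_sum[OF y] by simp
    qed
  qed
  show ?thesis unfolding joint_prob_def
  proof (rule integral_mono[OF int[OF Em] int[OF Fm]])
    fix y assume y: "y \<in> space M"
    show "(\<Sum>x\<in>seqs n. w x y * (if E x y then 1 else 0)) \<le> (\<Sum>x\<in>seqs n. w x y * (if F x y then 1 else 0))"
    proof (rule sum_mono)
      fix x :: "'x list" assume x: "x \<in> seqs n"
      show "w x y * (if E x y then 1 else 0) \<le> w x y * (if F x y then 1 else 0)"
        using imp[OF x y] w_nonneg[OF y, of x] by (cases "w x y > 0") auto
    qed
  qed
qed

end

lemma exists_below:
  fixes f :: "'a \<Rightarrow> real"
  assumes int: "integrable (measure_pmf p) f" and le: "measure_pmf.expectation p f < b"
  shows "\<exists>z\<in>set_pmf p. f z < b"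
proof (rule ccontr)
  assume "\<not> ?thesis"
  then have "\<forall>z\<in>set_pmf p. b \<le> f z" by auto
  then have "measure_pmf.expectation p (\<lambda>_. b) \<le> measure_pmf.expectation p f"
    by (intro integral_mono_AE int measure_pmf.integrable_const) (auto simp: AE_measure_pmf_iff)
  then show False using le by simp
qed



context chan begin

lemma int_E1_bnd: "\<bar>\<integral>y. E1f M n w A B y \<partial>M\<bar> \<le> 1"
proof -
  have "(\<integral>y. E1f M n w A B y \<partial>M) \<le> (\<integral>y. 1 \<partial>M)"
    by (intro integral_mono P.integrable_const_bound[where B=1])
       (auto simp: E1f_bnd E1f_meas abs_le_iff)
  moreover have "0 \<le> (\<integral>y. E1f M n w A B y \<partial>M)"
    by (intro integral_nonneg_AE) (auto simp: E1f_bnd)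
  ultimately show ?thesis using P.prob_space by simp
qed

lemma int_E2_bnd:
  assumes "finite I" "A ` seqs n \<subseteq> I"
  shows "\<bar>\<integral>y. E2f n w I A y \<partial>M\<bar> \<le> 2"
proof -
  have "(\<integral>y. E2f n w I A y \<partial>M) \<le> (\<integral>y. 2 \<partial>M)"
    by (intro integral_mono P.integrable_const_bound[where B=2])
       (auto simp: E2f_bnd[OF assms] E2f_meas abs_le_iff)
  moreover have "0 \<le> (\<integral>y. E2f n w I A y \<partial>M)"
    by (intro integral_nonneg_AE) (auto simp: E2f_bnd[OF assms])
  ultimately show ?thesis using P.prob_space by simp
qed

lemma step:
  fixes dd :: "'x list \<Rightarrow> 'y \<Rightarrow> real"
    and FA :: "('x list \<Rightarrow> 'a) set" and pA :: "('x list \<Rightarrow> 'a) pmf"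
    and FB :: "('x list \<Rightarrow> 'b) set" and pB :: "('x list \<Rightarrow> 'b) pmf"
  assumes suppA: "set_pmf pA \<subseteq> FA" and suppB: "set_pmf pB \<subseteq> FB"
    and hA: "\<forall>u\<in>seqs n. (\<Sum>u'\<in>{u'\<in>seqs n. u' \<noteq> u \<and> measure_pmf.prob pA {A. A u = A u'} > aA / real (card (img FA n))}.
               measure_pmf.prob pA {A. A u = A u'}) \<le> bA"
    and hB: "\<forall>u\<in>seqs n. (\<Sum>u'\<in>{u'\<in>seqs n. u' \<noteq> u \<and> measure_pmf.prob pB {B. B u = B u'} > aB / real (card (img FB n))}.
               measure_pmf.prob pB {B. B u = B u'}) \<le> bB"
    and cA: "card (img FA n) > 0"
    and eta: "\<eta> > 0" and s0: "s \<ge> 0" and t0: "t > 0"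
    and dd_meas: "\<And>x. dd x \<in> borel_measurable M"
    and bound: "(\<Sum>x\<in>seqs n. marg M w x * (if marg M w x \<le> t then 1 else 0))
        + (bA + bB + \<bar>aA / real (card (img FA n)) * (aB / real (card (img FB n)))\<bar> / t)
        + ((real (card (img FA n)) * s * (1 + bA) + \<bar>real (card (img FA n)) * max (aA / real (card (img FA n))) 0 - 1\<bar>) / (2 * \<eta>) + \<eta> / 2
           + 2 * joint_prob M n w (\<lambda>x y. w x y > s)) < \<delta>"
  shows "\<exists>A\<in>FA. \<exists>B\<in>FB. \<exists>c\<in>img FA n.
           code_error M n w dd A B c D \<le> joint_prob M n w (\<lambda>x y. dd x y > D) + \<delta>"
proof -
  define I where "I = img FA n"
  have finI: "finite I" using cA by (simp add: I_def card_gt_0_iff)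
  have cI: "card I > 0" using cA by (simp add: I_def)
  have AS: "A ` seqs n \<subseteq> I" if "A \<in> FA" for A
    using that unfolding I_def img_def by auto
  have ASp: "A ` seqs n \<subseteq> I" if "A \<in> set_pmf pA" for A
    using that suppA AS by auto
  define Q where "Q = pair_pmf pA pB"
  define f where "f (ab :: ('x list \<Rightarrow> 'a) \<times> ('x list \<Rightarrow> 'b)) = (\<integral>y. E1f M n w (fst ab) (snd ab) y \<partial>M) + (\<integral>y. E2f n w I (fst ab) y \<partial>M)" for ab
  have fint: "integrable Q f"
  proof (rule pmf_integrable_bnd[where C=3])
    fix ab assume "ab \<in> set_pmf Q"
    then have "fst ab \<in> set_pmf pA" by (auto simp: Q_def)
    then have "\<bar>\<integral>y. E2f n w I (fst ab) y \<partial>M\<bar> \<le> 2" by (intro int_E2_bnd finI ASp)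
    moreover have "\<bar>\<integral>y. E1f M n w (fst ab) (snd ab) y \<partial>M\<bar> \<le> 1" by (rule int_E1_bnd)
    ultimately show "\<bar>f ab\<bar> \<le> 3" unfolding f_def by linarith
  qed
  have int1: "integrable Q (\<lambda>ab. \<integral>y. E1f M n w (fst ab) (snd ab) y \<partial>M)"
    by (rule pmf_integrable_bnd[where C=1]) (rule int_E1_bnd)
  have int2: "integrable pA (\<lambda>A. \<integral>y. E2f n w I A y \<partial>M)"
    by (rule pmf_integrable_bnd[where C=2]) (intro int_E2_bnd finI ASp)
  have "measure_pmf.expectation Q f = measure_pmf.expectation Q (\<lambda>ab. \<integral>y. E1f M n w (fst ab) (snd ab) y \<partial>M)
        + measure_pmf.expectation Q (\<lambda>ab. \<integral>y. E2f n w I (fst ab) y \<partial>M)"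
    unfolding f_def
  proof (rule Bochner_Integration.integral_add[OF int1])
    show "integrable Q (\<lambda>ab. \<integral>y. E2f n w I (fst ab) y \<partial>M)"
      by (rule pmf_integrable_bnd[where C=2]) (auto simp: Q_def intro!: int_E2_bnd finI ASp)
  qed
  also have "measure_pmf.expectation Q (\<lambda>ab. \<integral>y. E2f n w I (fst ab) y \<partial>M)
      = measure_pmf.expectation pA (\<lambda>A. \<integral>y. E2f n w I A y \<partial>M)"
    unfolding Q_def by (rule expectation_pair_pmf_fst)
  also have "measure_pmf.expectation Q (\<lambda>ab. \<integral>y. E1f M n w (fst ab) (snd ab) y \<partial>M)
      \<le> (\<Sum>x\<in>seqs n. marg M w x * (if marg M w x \<le> t then 1 else 0))
        + (bA + bB + \<bar>aA / real (card (img FA n)) * (aB / real (card (img FB n)))\<bar> / t)"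
    unfolding Q_def by (rule E1_exp[OF hA hB t0])
  also have "measure_pmf.expectation pA (\<lambda>A. \<integral>y. E2f n w I A y \<partial>M)
      \<le> (real (card I) * s * (1 + bA) + \<bar>real (card I) * max (aA / real (card (img FA n))) 0 - 1\<bar>) / (2 * \<eta>) + \<eta> / 2
        + 2 * joint_prob M n w (\<lambda>x y. w x y > s)"
    by (rule E2_exp[OF hA finI cI ASp eta s0])
  finally have "measure_pmf.expectation Q f < \<delta>" using bound unfolding I_def by simp
  from exists_below[OF fint this] obtain ab where ab: "ab \<in> set_pmf Q" "f ab < \<delta>" by blast
  then have A: "fst ab \<in> FA" and B: "snd ab \<in> FB" using suppA suppB by (auto simp: Q_def)
  have Ine: "I \<noteq> {}" using cI by auto
  have "\<exists>c\<in>I. code_error M n w dd (fst ab) (snd ab) c D \<le> joint_prob M n w (\<lambda>x y. dd x y > D)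
            + (\<integral>y. E1f M n w (fst ab) (snd ab) y \<partial>M) + (\<integral>y. E2f n w I (fst ab) y \<partial>M)"
    by (rule exists_c[OF dd_meas finI Ine AS[OF A]])
  then obtain c where "c \<in> I" and c: "code_error M n w dd (fst ab) (snd ab) c D \<le> joint_prob M n w (\<lambda>x y. dd x y > D)
            + (\<integral>y. E1f M n w (fst ab) (snd ab) y \<partial>M) + (\<integral>y. E2f n w I (fst ab) y \<partial>M)" by blast
  show ?thesis
    using A B \<open>c \<in> I\<close> c ab(2) unfolding f_def I_def by (intro bexI[of _ "fst ab"] bexI[of _ "snd ab"] bexI[of _ c]) auto
qed

end


lemma card_rate:
  assumes n: "n \<ge> 1" and rt: "1 / real n * log 2 (real k) = r" and r: "r > 0"
  shows "real k = 2 powr (real n * r)" "k > 0"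
proof -
  show k0: "k > 0"
  proof (rule ccontr)
    assume "\<not> k > 0" then have "k = 0" by simp
    then show False using rt r by (simp add: log_def)
  qed
  have "log 2 (real k) = real n * r" using rt n by (simp add: field_simps)
  moreover have "2 powr (log 2 (real k)) = real k" using k0 by simp
  ultimately show "real k = 2 powr (real n * r)" by simp
qed

lemma log_ge_of_le:
  assumes a: "0 < a" "a \<le> 2 powr (- c)"
  shows "log 2 (1 / a) \<ge> c"
proof -
  have "log 2 a \<le> log 2 (2 powr (- c))" using a by (subst log_le_cancel_iff) auto
  then have "log 2 a \<le> - c" by simp
  moreover have "log 2 (1 / a) = - log 2 a" using a by (simp add: log_divide)
  ultimately show ?thesis by simp
qed

lemma log_lt_of_gt:
  assumes a: "2 powr (- c) < a"
  shows "log 2 (1 / a) < c"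
proof -
  have a0: "0 < a" using a by (smt (verit) powr_gt_zero)
  have "log 2 (2 powr (- c)) < log 2 a" using a a0 by (subst log_less_cancel_iff) auto
  then have "- c < log 2 a" by simp
  moreover have "log 2 (1 / a) = - log 2 a" using a0 by (simp add: log_divide)
  ultimately show ?thesis by simp
qed

lemma powr_lim0:
  assumes c: "c < 0"
  shows "(\<lambda>n. 2 powr (real n * c)) \<longlonglongrightarrow> 0"
proof -
  have eq: "2 powr (real n * c) = (2 powr c) ^ n" for n
    by (simp add: powr_realpow[symmetric] powr_powr mult.commute)
  have "2 powr c < 1" using c by (simp add: powr_less_one)
  then have "(\<lambda>n. (2 powr c) ^ n) \<longlonglongrightarrow> 0"
    by (intro LIMSEQ_power_zero) auto
  then show ?thesis unfolding eq .
qed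



theorem theorem2:
  fixes PY :: "nat \<Rightarrow> 'y measure"
    and W :: "nat \<Rightarrow> ('x::finite) list \<Rightarrow> 'y \<Rightarrow> real"
    and d :: "nat \<Rightarrow> 'x list \<Rightarrow> 'y \<Rightarrow> real"
    and D r R :: real
    and FA :: "nat \<Rightarrow> ('x list \<Rightarrow> 'a) set" and pA :: "nat \<Rightarrow> ('x list \<Rightarrow> 'a) pmf"
    and FB :: "nat \<Rightarrow> ('x list \<Rightarrow> 'b) set" and pB :: "nat \<Rightarrow> ('x list \<Rightarrow> 'b) pmf"
  assumes PY: "\<And>n. prob_space (PY n)"
    and W_meas: "\<And>n x. W n x \<in> borel_measurable (PY n)"
    and W_nonneg: "\<And>n x y. y \<in> space (PY n) \<Longrightarrow> W n x y \<ge> 0"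
    and W_sum: "\<And>n y. y \<in> space (PY n) \<Longrightarrow> (\<Sum>x\<in>seqs n. W n x y) = 1"
    and d_meas: "\<And>n x. d n x \<in> borel_measurable (PY n)"
    and d_nonneg: "\<And>n x y. d n x y \<ge> 0"
    and D: "D \<ge> 0"
    and ensA: "ensemble FA pA" and hashA: "hash_property FA pA"
    and ensB: "ensemble FB pB" and hashB: "hash_property FB pB"
    and rateA: "\<And>n. n \<ge> 1 \<Longrightarrow> 1 / real n * log 2 (real (card (img (FA n) n))) = r"
    and rateB: "\<And>n. n \<ge> 1 \<Longrightarrow> 1 / real n * log 2 (real (card (img (FB n) n))) = R"
    and r_pos: "r > 0" and R_pos: "R > 0"
    and r_lt: "ereal r < inf_cond_entropy PY W"
    and rR_gt: "sup_entropy PY W < ereal (r + R)"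
  shows "\<forall>\<delta>>0. \<forall>\<^sub>F n in sequentially. \<exists>A\<in>FA n. \<exists>B\<in>FB n. \<exists>c\<in>img (FA n) n.
           code_error (PY n) n (W n) (d n) A B c D
             \<le> joint_prob (PY n) n (W n) (\<lambda>x y. d n x y > D) + \<delta>"
proof (intro allI impI)
  fix \<delta> :: real assume dpos: "\<delta> > 0"
  have ch: "chan (PY n) n (W n)" for n
    by (rule chan.intro[OF PY W_meas W_nonneg W_sum])
  obtain aA bA :: "nat \<Rightarrow> real" where aA: "aA \<longlonglongrightarrow> 1" and bA: "bA \<longlonglongrightarrow> 0"
    and hA: "\<forall>n. \<forall>u\<in>seqs n. (\<Sum>u'\<in>{u'\<in>seqs n. u' \<noteq> u \<and>
              measure_pmf.prob (pA n) {A. A u = A u'} > aA n / real (card (img (FA n) n))}.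
            measure_pmf.prob (pA n) {A. A u = A u'}) \<le> bA n"
    using hashA unfolding hash_property_def by blast
  obtain aB bB :: "nat \<Rightarrow> real" where aB: "aB \<longlonglongrightarrow> 1" and bB: "bB \<longlonglongrightarrow> 0"
    and hB: "\<forall>n. \<forall>u\<in>seqs n. (\<Sum>u'\<in>{u'\<in>seqs n. u' \<noteq> u \<and>
              measure_pmf.prob (pB n) {B. B u = B u'} > aB n / real (card (img (FB n) n))}.
            measure_pmf.prob (pB n) {B. B u = B u'}) \<le> bB n"
    using hashB unfolding hash_property_def by blast
  have "\<exists>\<theta>\<in>{\<theta>. (\<lambda>n. joint_prob (PY n) n (W n) (\<lambda>x y. 1 / real n * log 2 (1 / W n x y) < \<theta>)) \<longlonglongrightarrow> 0}. ereal r < ereal \<theta>"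
    using r_lt unfolding inf_cond_entropy_def less_SUP_iff .
  then obtain \<theta>c where \<theta>c: "r < \<theta>c"
    and jC: "(\<lambda>n. joint_prob (PY n) n (W n) (\<lambda>x y. 1 / real n * log 2 (1 / W n x y) < \<theta>c)) \<longlonglongrightarrow> 0"
    by auto
  have "\<exists>\<theta>\<in>{\<theta>. (\<lambda>n. joint_prob (PY n) n (W n) (\<lambda>x y. 1 / real n * log 2 (1 / marg (PY n) (W n) x) > \<theta>)) \<longlonglongrightarrow> 0}. ereal \<theta> < ereal (r + R)"
    using rR_gt unfolding sup_entropy_def INF_less_iff .
  then obtain \<theta>x where \<theta>x: "\<theta>x < r + R"
    and jX: "(\<lambda>n. joint_prob (PY n) n (W n) (\<lambda>x y. 1 / real n * log 2 (1 / marg (PY n) (W n) x) > \<theta>x)) \<longlonglongrightarrow> 0"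
    by auto
  define \<theta>1 where "\<theta>1 = (r + \<theta>c) / 2"
  define \<theta>2 where "\<theta>2 = (\<theta>x + (r + R)) / 2"
  define \<eta> where "\<eta> = \<delta> / 4"
  have eta: "\<eta> > 0" using dpos by (simp add: \<eta>_def)
  define jXn where "jXn n = joint_prob (PY n) n (W n) (\<lambda>x y. 1 / real n * log 2 (1 / marg (PY n) (W n) x) > \<theta>x)" for n
  define jCn where "jCn n = joint_prob (PY n) n (W n) (\<lambda>x y. 1 / real n * log 2 (1 / W n x y) < \<theta>c)" for n
  define p1 where "p1 n = 2 powr (real n * (\<theta>2 - r - R))" for n :: nat
  define p2 where "p2 n = 2 powr (real n * (r - \<theta>1))" for n :: nat
  have l1: "p1 \<longlonglongrightarrow> 0" unfolding p1_def by (rule powr_lim0) (use \<theta>x in \<open>simp add: \<theta>2_def field_simps\<close>)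
  have l2: "p2 \<longlonglongrightarrow> 0" unfolding p2_def by (rule powr_lim0) (use \<theta>c in \<open>simp add: \<theta>1_def\<close>)
  have l3: "(\<lambda>n. max (aA n) 0) \<longlonglongrightarrow> max 1 0" by (intro tendsto_max aA tendsto_const)
  define b where "b n = jXn n + bA n + bB n + \<bar>aA n * aB n\<bar> * p1 n
       + (p2 n * (1 + bA n) + \<bar>max (aA n) 0 - 1\<bar>) / (2 * \<eta>) + 2 * jCn n" for n
  have blim: "b \<longlonglongrightarrow> 0 + 0 + 0 + \<bar>1 * 1\<bar> * 0 + (0 * (1 + 0) + \<bar>max 1 0 - 1\<bar>) / (2 * \<eta>) + 2 * 0"
    unfolding b_def
    by (intro tendsto_add tendsto_mult tendsto_divide tendsto_rabs tendsto_diff tendsto_const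
          l1 l2 l3 aA aB bA bB jX[folded jXn_def] jC[folded jCn_def]) (use eta in simp)
  then have "b \<longlonglongrightarrow> 0" by simp
  then have ev1: "\<forall>\<^sub>F n in sequentially. b n < \<delta> / 4"
    by (rule order_tendstoD(2)) (use dpos in simp)
  have ev2: "\<forall>\<^sub>F n in sequentially. n \<ge> 1" by (rule eventually_ge_at_top)
  show "\<forall>\<^sub>F n in sequentially. \<exists>A\<in>FA n. \<exists>B\<in>FB n. \<exists>c\<in>img (FA n) n.
           code_error (PY n) n (W n) (d n) A B c D
             \<le> joint_prob (PY n) n (W n) (\<lambda>x y. d n x y > D) + \<delta>"
    using ev1 ev2
  proof eventually_elim
    case (elim n)
    note n = elim(2)
    interpret C: chan "PY n" n "W n" by (rule ch)
    define MA where "MA = real (card (img (FA n) n))"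
    define MB where "MB = real (card (img (FB n) n))"
    have MA: "MA = 2 powr (real n * r)" and cA: "card (img (FA n) n) > 0"
      using card_rate[OF n rateA[OF n] r_pos] by (simp_all add: MA_def)
    have MB: "MB = 2 powr (real n * R)" and cB: "card (img (FB n) n) > 0"
      using card_rate[OF n rateB[OF n] R_pos] by (simp_all add: MB_def)
    define s where "s = 2 powr (- (real n * \<theta>1))"
    define t where "t = 2 powr (- (real n * \<theta>2))"
    have s0: "s \<ge> 0" and t0: "t > 0" by (simp_all add: s_def t_def)
    have n0: "real n > 0" using n by simp
    have i1: "(\<Sum>x\<in>seqs n. marg (PY n) (W n) x * (if marg (PY n) (W n) x \<le> t then 1 else 0)) \<le> jXn n"
    proof -
      have "jXn n = (\<Sum>x\<in>seqs n. marg (PY n) (W n) x *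
              (if 1 / real n * log 2 (1 / marg (PY n) (W n) x) > \<theta>x then 1 else 0))"
        unfolding jXn_def by (rule C.jp_x)
      moreover have "marg (PY n) (W n) x * (if marg (PY n) (W n) x \<le> t then 1 else 0)
          \<le> marg (PY n) (W n) x * (if 1 / real n * log 2 (1 / marg (PY n) (W n) x) > \<theta>x then 1 else 0)"
        if x: "x \<in> seqs n" for x
      proof (cases "marg (PY n) (W n) x > 0 \<and> marg (PY n) (W n) x \<le> t")
        case True
        then have "log 2 (1 / marg (PY n) (W n) x) \<ge> real n * \<theta>2"
          by (intro log_ge_of_le) (auto simp: t_def)
        then have "1 / real n * log 2 (1 / marg (PY n) (W n) x) \<ge> \<theta>2"
          using n0 by (simp add: field_simps)
        moreover have "\<theta>x < \<theta>2" using \<theta>x by (simp add: \<theta>2_def)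
        ultimately show ?thesis using True by auto
      next
        case False
        then show ?thesis using C.marg_nonneg[OF x] by auto
      qed
      ultimately show ?thesis by (simp add: sum_mono)
    qed
    have i2: "\<bar>aA n / MA * (aB n / MB)\<bar> / t = \<bar>aA n * aB n\<bar> * 2 powr (real n * (\<theta>2 - r - R))"
    proof -
      have "\<bar>aA n / MA * (aB n / MB)\<bar> / t = \<bar>aA n * aB n\<bar> / (MA * MB * t)"
        using MA MB by (simp add: abs_mult abs_divide)
      also have "MA * MB * t = 2 powr (real n * (r + R - \<theta>2))"
        unfolding MA MB t_def by (simp add: powr_add[symmetric] algebra_simps)
      also have "\<bar>aA n * aB n\<bar> / 2 powr (real n * (r + R - \<theta>2)) = \<bar>aA n * aB n\<bar> * 2 powr (real n * (\<theta>2 - r - R))"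
        by (simp add: powr_minus_divide[symmetric] divide_inverse powr_minus[symmetric] algebra_simps)
      finally show ?thesis .
    qed
    have i3: "MA * s = 2 powr (real n * (r - \<theta>1))"
      unfolding MA s_def by (simp add: powr_add[symmetric] algebra_simps)
    have i4: "MA * max (aA n / MA) 0 = max (aA n) 0"
    proof -
      have MA0: "MA > 0" using MA by simp
      then show ?thesis by (cases "aA n \<ge> 0") (auto simp: max_def divide_le_0_iff)
    qed
    have i5: "joint_prob (PY n) n (W n) (\<lambda>x y. W n x y > s) \<le> jCn n"
      unfolding jCn_def
    proof (rule C.jp_mono)
      show "(\<lambda>y. if W n x y > s then 1 else 0::real) \<in> borel_measurable (PY n)" for x
        using W_meas[of n x] by measurable
      show "(\<lambda>y. if 1 / real n * log 2 (1 / W n x y) < \<theta>c then 1 else 0::real) \<in> borel_measurable (PY n)" for x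
        using W_meas[of n x] by measurable
      fix x y assume "W n x y > s"
      then have "log 2 (1 / W n x y) < real n * \<theta>1"
        unfolding s_def by (rule log_lt_of_gt)
      then have "1 / real n * log 2 (1 / W n x y) < \<theta>1" using n0 by (simp add: field_simps)
      moreover have "\<theta>1 < \<theta>c" using \<theta>c by (simp add: \<theta>1_def)
      ultimately show "1 / real n * log 2 (1 / W n x y) < \<theta>c" by simp
    qed
    have bnd: "(\<Sum>x\<in>seqs n. marg (PY n) (W n) x * (if marg (PY n) (W n) x \<le> t then 1 else 0))
        + (bA n + bB n + \<bar>aA n / real (card (img (FA n) n)) * (aB n / real (card (img (FB n) n)))\<bar> / t)
        + ((real (card (img (FA n) n)) * s * (1 + bA n) + \<bar>real (card (img (FA n) n)) * max (aA n / real (card (img (FA n) n))) 0 - 1\<bar>) / (2 * \<eta>) + \<eta> / 2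
           + 2 * joint_prob (PY n) n (W n) (\<lambda>x y. W n x y > s)) < \<delta>"
    proof -
      have "(\<Sum>x\<in>seqs n. marg (PY n) (W n) x * (if marg (PY n) (W n) x \<le> t then 1 else 0))
        + (bA n + bB n + \<bar>aA n / MA * (aB n / MB)\<bar> / t)
        + ((MA * s * (1 + bA n) + \<bar>MA * max (aA n / MA) 0 - 1\<bar>) / (2 * \<eta>) + \<eta> / 2
           + 2 * joint_prob (PY n) n (W n) (\<lambda>x y. W n x y > s)) \<le> b n + \<eta> / 2"
        unfolding b_def i2 i3 i4 p1_def p2_def using i1 i5 by simp
      also have "\<dots> < \<delta>" using elim(1) dpos by (simp add: \<eta>_def)
      finally show ?thesis unfolding MA_def MB_def .
    qed
    have sA: "set_pmf (pA n) \<subseteq> FA n" using ensA by (simp add: ensemble_def)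
    have sB: "set_pmf (pB n) \<subseteq> FB n" using ensB by (simp add: ensemble_def)
    show ?case
      by (rule C.step[OF sA sB spec[OF hA, of n] spec[OF hB, of n] cA eta s0 t0 d_meas bnd])
  qed
qed


end
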